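(* Let $d\ge1$, $m\ge1$ be integers, $B>0$, $N\ge1$ an integer and $n=N^d$. Divide $\mathcal X=[0,1]^d$ into $n$ equal axis-aligned cubes $\mathcal X_1,\dots,\mathcal X_n$ of side $1/N$ with centers $x^{(1)},\dots,x^{(n)}$ (boundary points assigned to an arbitrary adjacent cube), and for $f:\mathcal X\to\mathbb R$ let $g_n$ be the function equal to $f(x^{(i)})$ on $\mathcal X_i$. Then \[\sup_{f\in\mathcal F_{d,m,B}}|L_f-L_{g_n}|=\begin{cases}\Theta_{m,d}(Bn^{-1/d}),&\text{if }m=1\text{ or }Bn^{-1/d}>1,\\ \Theta_{m,d}(\max\{B,B^2\}n^{-2/d}),&\text{otherwise},\end{cases}\] and $\sup_{f\in\mathcal F_{d,m,B}}D_{\sup\text{-}\log}(P_f,P_{g_n})=\Theta_{m,d}(Bn^{-1/d})$.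
   Context: For bounded measurable $f:\mathcal X\to\mathbb R$: $Z_f=\int_{\mathcal X}e^f dx$, $L_f=\log Z_f$, $P_f$ the distribution with density $e^f/Z_f$. $\|f\|_{C^m}=\sup_{\alpha\in\mathbb N_0^d,|\alpha|_1\le m}\|\partial^\alpha f\|_\infty$ and $\mathcal F_{d,m,B}=\{f\in C^m(\mathcal X):\|f\|_{C^m}\le B\}$. $D_{\sup\text{-}\log}(P,Q)=\|\log(dP/dQ)\|_\infty$ (essential sup; $\infty$ unless mutually absolutely continuous). $\Theta_{m,d}$: the two sides are bounded by each other up to positive constants depending only on $m,d$, uniformly in $B>0$ and $n$ (within the stated case). *)

theory Defs
  imports "HOL-Analysis.Analysis" "HOL-Probability.Probability"
begin

definition unitcube :: "(real^'d) set" where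
  "unitcube = {x. \<forall>i. 0 \<le> x$i \<and> x$i \<le> 1}"

definition pd :: "'d::finite \<Rightarrow> (real^'d \<Rightarrow> real) \<Rightarrow> real^'d \<Rightarrow> real" where
  "pd i f x = deriv (\<lambda>t. f (x + t *\<^sub>R axis i 1)) 0"

fun pdl :: "'d::finite list \<Rightarrow> (real^'d \<Rightarrow> real) \<Rightarrow> real^'d \<Rightarrow> real" where
  "pdl [] f = f"
| "pdl (i # is) f = pd i (pdl is f)"

fun Ck :: "nat \<Rightarrow> (real^'d::finite \<Rightarrow> real) \<Rightarrow> bool" where
  "Ck 0 f = continuous_on UNIV f"
| "Ck (Suc k) f = (continuous_on UNIV f \<and>
      (\<forall>i x. (\<lambda>t. f (x + t *\<^sub>R axis i 1)) differentiable (at 0)) \<and>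
      (\<forall>i. Ck k (pd i f)))"

definition Fclass :: "nat \<Rightarrow> real \<Rightarrow> (real^'d::finite \<Rightarrow> real) set" where
  "Fclass m B = {f. Ck m f \<and>
      (\<forall>is::'d list. length is \<le> m \<longrightarrow> (\<forall>x\<in>unitcube. \<bar>pdl is f x\<bar> \<le> B))}"

definition muX :: "(real^'d::finite) measure" where
  "muX = restrict_space lebesgue unitcube"

definition Zf :: "(real^'d::finite \<Rightarrow> real) \<Rightarrow> real" where
  "Zf f = (\<integral>x. exp (f x) \<partial>muX)"

definition Lf :: "(real^'d::finite \<Rightarrow> real) \<Rightarrow> real" where
  "Lf f = ln (Zf f)"

definition Pf :: "(real^'d::finite \<Rightarrow> real) \<Rightarrow> (real^'d) measure" where
  "Pf f = density muX (\<lambda>x. ennreal (exp (f x) / Zf f))"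

definition D_suplog :: "'a measure \<Rightarrow> 'a measure \<Rightarrow> ereal" where
  "D_suplog P Q = (if absolutely_continuous P Q \<and> absolutely_continuous Q P
     then esssup Q (\<lambda>x. ereal \<bar>ln (enn2real (RN_deriv Q P x))\<bar>) else \<infinity>)"

definition cell :: "nat \<Rightarrow> ('d::finite \<Rightarrow> nat) \<Rightarrow> (real^'d) set" where
  "cell N k = {x. \<forall>i. real (k i) / real N \<le> x$i \<and> x$i \<le> (real (k i) + 1) / real N}"

definition center :: "nat \<Rightarrow> ('d::finite \<Rightarrow> nat) \<Rightarrow> real^'d" where
  "center N k = (\<chi> i. (real (k i) + 1/2) / real N)"

definition valid_assign :: "nat \<Rightarrow> (real^'d::finite \<Rightarrow> ('d \<Rightarrow> nat)) \<Rightarrow> bool" where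
  "valid_assign N \<sigma> = (\<forall>x\<in>unitcube. (\<forall>i. \<sigma> x i < N) \<and> x \<in> cell N (\<sigma> x))"

definition gn :: "nat \<Rightarrow> (real^'d::finite \<Rightarrow> ('d \<Rightarrow> nat)) \<Rightarrow> (real^'d \<Rightarrow> real) \<Rightarrow> real^'d \<Rightarrow> real" where
  "gn N \<sigma> f x = f (center N (\<sigma> x))"

end

theory Submission
  imports Defs
begin


lemma Ck_Suc_imp: "Ck (Suc k) f \<Longrightarrow> Ck k f"
proof (induction k arbitrary: f)
  case 0 then show ?case by simp
next
  case (Suc k)
  have "Ck (Suc k) (pd i f)" for i using Suc.prems by (simp only: Ck.simps) blast
  then have "Ck k (pd i f)" for i using Suc.IH by blast
  then show ?case using Suc.prems by (simp only: Ck.simps) blast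
qed

lemma Ck_le': "k \<le> m \<Longrightarrow> Ck m f \<Longrightarrow> Ck k f"
proof (induction m arbitrary: f)
  case 0 then show ?case by simp
next
  case (Suc m)
  then show ?case by (metis Ck_Suc_imp le_Suc_eq)
qed

lemma Ck_cont: "Ck k f \<Longrightarrow> continuous_on UNIV f"
  by (cases k) auto

lemma deriv_line:
  assumes "Ck (Suc k) f"
  shows "((\<lambda>t. f (x + t *\<^sub>R axis i 1)) has_real_derivative pd i f (x + t *\<^sub>R axis i 1)) (at t)"
proof -
  define y where "y = x + t *\<^sub>R axis i 1"
  have "(\<lambda>s. f (y + s *\<^sub>R axis i 1)) differentiable (at 0)" using assms by simp
  then have "((\<lambda>s. f (y + s *\<^sub>R axis i 1)) has_real_derivative pd i f y) (at 0)"
    unfolding pd_def by (simp add: DERIV_deriv_iff_real_differentiable)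
  then have "((\<lambda>s. f (y + s *\<^sub>R axis i 1)) has_real_derivative pd i f y) (at (t + (-t)))" by simp
  then have "((\<lambda>s. f (y + (s + -t) *\<^sub>R axis i 1)) has_real_derivative pd i f y) (at t)"
    by (subst (asm) DERIV_shift) 
  moreover have "(\<lambda>s. f (y + (s + -t) *\<^sub>R axis i 1)) = (\<lambda>s. f (x + s *\<^sub>R axis i 1))"
    by (rule ext) (simp add: y_def algebra_simps)
  ultimately show ?thesis by (simp add: y_def)
qed

lemma unitcube_cbox: "unitcube = cbox 0 (1::real^'d)"
  by (auto simp: unitcube_def mem_box_cart)

lemma convex_unitcube: "convex unitcube"
  by (simp add: unitcube_cbox convex_box)

lemma line_in_cube:
  assumes "x \<in> unitcube" "x + s *\<^sub>R axis i 1 \<in> unitcube" "t \<in> closed_segment 0 s"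
  shows "x + t *\<^sub>R axis i 1 \<in> unitcube"
proof -
  obtain u where u: "0 \<le> u" "u \<le> 1" "t = u * s"
    using assms(3) by (auto simp: closed_segment_def)
  have "x + t *\<^sub>R axis i 1 = (1 - u) *\<^sub>R x + u *\<^sub>R (x + s *\<^sub>R axis i 1)"
    by (simp add: u algebra_simps)
  also have "\<dots> \<in> unitcube"
    using convexD[OF convex_unitcube assms(1) assms(2), of "1-u" u] u by simp
  finally show ?thesis .
qed

lemma line_bound:
  assumes "Ck (Suc k) f" "x \<in> unitcube" "x + s *\<^sub>R axis i 1 \<in> unitcube"
    and M: "\<And>z. z \<in> unitcube \<Longrightarrow> \<bar>pd i f z\<bar> \<le> M"
  shows "\<bar>f (x + s *\<^sub>R axis i 1) - f x\<bar> \<le> M * \<bar>s\<bar>"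
proof -
  have "norm ((\<lambda>t. f (x + t *\<^sub>R axis i 1)) s - (\<lambda>t. f (x + t *\<^sub>R axis i 1)) 0) \<le> M * norm (s - 0)"
  proof (rule field_differentiable_bound[where S="closed_segment 0 s"])
    show "convex (closed_segment 0 s)" by simp
    fix z assume z: "z \<in> closed_segment 0 s"
    show "((\<lambda>t. f (x + t *\<^sub>R axis i 1)) has_field_derivative pd i f (x + z *\<^sub>R axis i 1)) (at z within closed_segment 0 s)"
      using deriv_line[OF assms(1)] by (rule has_field_derivative_at_within)
    show "norm (pd i f (x + z *\<^sub>R axis i 1)) \<le> M"
      using M line_in_cube[OF assms(2,3) z] by simp
  qed (rule ends_in_segment)+
  then show ?thesis by (simp only: real_norm_def scale_zero_left add_0_right diff_0_right)
qed


lemma taylor2_line: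
  assumes "Ck (Suc (Suc k)) f" "x \<in> unitcube" "x + s *\<^sub>R axis i 1 \<in> unitcube"
    and M: "\<And>z. z \<in> unitcube \<Longrightarrow> \<bar>pd i (pd i f) z\<bar> \<le> M"
  shows "\<bar>f (x + s *\<^sub>R axis i 1) - f x - s * pd i f x\<bar> \<le> M * s\<^sup>2"
proof -
  have C1: "Ck (Suc k) (pd i f)" using assms(1) by (simp only: Ck.simps) blast
  let ?phi = "\<lambda>t. f (x + t *\<^sub>R axis i 1) - t * pd i f x"
  have M0: "M \<ge> 0" using M[OF assms(2)] by simp
  have "norm (?phi s - ?phi 0) \<le> (M * \<bar>s\<bar>) * norm (s - 0)"
  proof (rule field_differentiable_bound[where S="closed_segment 0 s"])
    show "convex (closed_segment 0 s)" by simp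
    fix z assume z: "z \<in> closed_segment 0 s"
    have d1: "((\<lambda>t. f (x + t *\<^sub>R axis i 1)) has_real_derivative pd i f (x + z *\<^sub>R axis i 1)) (at z)"
      by (rule deriv_line[OF assms(1)])
    have d2: "((\<lambda>t. t * pd i f x) has_real_derivative 1 * pd i f x) (at z)"
      by (rule DERIV_cmult_right[OF DERIV_ident])
    have "(?phi has_real_derivative (pd i f (x + z *\<^sub>R axis i 1) - 1 * pd i f x)) (at z)"
      by (rule DERIV_diff[OF d1 d2])
    then show "(?phi has_field_derivative (pd i f (x + z *\<^sub>R axis i 1) - pd i f x)) (at z within closed_segment 0 s)"
      by (simp add: has_field_derivative_at_within)
    have zin: "x + z *\<^sub>R axis i 1 \<in> unitcube" using line_in_cube[OF assms(2,3) z] .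
    have "\<bar>pd i f (x + z *\<^sub>R axis i 1) - pd i f x\<bar> \<le> M * \<bar>z\<bar>"
      by (rule line_bound[OF C1 assms(2) zin M])
    also have "\<dots> \<le> M * \<bar>s\<bar>"
    proof -
      have "\<bar>z\<bar> \<le> \<bar>s\<bar>" using z unfolding closed_segment_eq_real_ivl by (cases "0 \<le> s") auto
      then show ?thesis using M0 by (simp add: mult_left_mono)
    qed
    finally show "norm (pd i f (x + z *\<^sub>R axis i 1) - pd i f x) \<le> M * \<bar>s\<bar>" by simp
  qed (rule ends_in_segment)+
  then show ?thesis by (simp add: power2_eq_square abs_mult)
qed
definition zp :: "real^'d \<Rightarrow> real^'d \<Rightarrow> 'd set \<Rightarrow> real^'d" where
  "zp x y S = (\<chi> j. if j \<in> S then y$j else x$j)"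

lemma zp_empty [simp]: "zp x y {} = x"
  by (simp add: zp_def vec_eq_iff)

lemma zp_UNIV [simp]: "zp x y UNIV = y"
  by (simp add: zp_def vec_eq_iff)

lemma zp_insert: "i \<notin> S \<Longrightarrow> zp x y (insert i S) = zp x y S + (y$i - x$i) *\<^sub>R axis i 1"
  by (auto simp: zp_def vec_eq_iff axis_def)

lemma zp_nth: "zp x y S $ j = (if j \<in> S then y$j else x$j)"
  by (simp add: zp_def)

lemma zp_cube: "x \<in> unitcube \<Longrightarrow> y \<in> unitcube \<Longrightarrow> zp x y S \<in> unitcube"
  by (auto simp: unitcube_def zp_nth)

lemma lipschitz_cube:
  assumes C: "Ck (Suc k) f" and M: "\<And>i z. z \<in> unitcube \<Longrightarrow> \<bar>pd i f z\<bar> \<le> M"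
    and x: "x \<in> unitcube" and y: "y \<in> unitcube"
  shows "\<bar>f y - f x\<bar> \<le> M * (\<Sum>i\<in>UNIV. \<bar>y$i - x$i\<bar>)"
proof -
  have "finite S \<Longrightarrow> \<bar>f (zp x y S) - f x\<bar> \<le> M * (\<Sum>i\<in>S. \<bar>y$i - x$i\<bar>)" for S
  proof (induction S rule: finite_induct)
    case empty then show ?case by simp
  next
    case (insert i S)
    let ?z = "zp x y S"
    have z: "?z \<in> unitcube" using zp_cube[OF x y] .
    have z': "?z + (y$i - x$i) *\<^sub>R axis i 1 \<in> unitcube"
      using zp_cube[OF x y, of "insert i S"] zp_insert[OF insert(2)] by simp
    have "\<bar>f (?z + (y$i - x$i) *\<^sub>R axis i 1) - f ?z\<bar> \<le> M * \<bar>y$i - x$i\<bar>"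
      by (rule line_bound[OF C z z' M])
    then have "\<bar>f (zp x y (insert i S)) - f x\<bar> \<le> M * \<bar>y$i - x$i\<bar> + M * (\<Sum>i\<in>S. \<bar>y$i - x$i\<bar>)"
      using insert.IH zp_insert[OF insert(2)] by simp
    then show ?case using insert(1,2) by (simp add: distrib_left)
  qed
  from this[of UNIV] show ?thesis by simp
qed

lemma taylor2_cube:
  assumes C: "Ck (Suc (Suc k)) f"
    and M: "\<And>i j z. z \<in> unitcube \<Longrightarrow> \<bar>pd j (pd i f) z\<bar> \<le> M"
    and x: "x \<in> unitcube" and c: "c \<in> unitcube"
  shows "\<bar>f x - f c - (\<Sum>i\<in>UNIV. (x$i - c$i) * pd i f c)\<bar> \<le> 2 * M * (\<Sum>i\<in>UNIV. \<bar>x$i - c$i\<bar>)\<^sup>2"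
proof -
  define D where "D = (\<Sum>i\<in>UNIV. \<bar>x$i - c$i\<bar>)"
  have M0: "M \<ge> 0" using M[OF c] by (meson abs_ge_zero order_trans)
  have C1: "Ck (Suc k) (pd i f)" for i using C by (simp only: Ck.simps) blast
  have "finite S \<Longrightarrow> \<bar>f (zp c x S) - f c - (\<Sum>i\<in>S. (x$i - c$i) * pd i f c)\<bar> \<le> 2 * M * D * (\<Sum>i\<in>S. \<bar>x$i - c$i\<bar>)" for S
  proof (induction S rule: finite_induct)
    case empty then show ?case by simp
  next
    case (insert i S)
    let ?z = "zp c x S"
    define t where "t = x$i - c$i"
    have z: "?z \<in> unitcube" using zp_cube[OF c x] .
    have z': "?z + t *\<^sub>R axis i 1 \<in> unitcube"
      using zp_cube[OF c x, of "insert i S"] zp_insert[OF insert(2)] by (simp add: t_def)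
    have E1: "\<bar>f (?z + t *\<^sub>R axis i 1) - f ?z - t * pd i f ?z\<bar> \<le> M * t\<^sup>2"
      by (rule taylor2_line[OF C z z' M])
    have "\<bar>pd i f ?z - pd i f c\<bar> \<le> M * (\<Sum>j\<in>UNIV. \<bar>?z$j - c$j\<bar>)"
      by (rule lipschitz_cube[OF C1 M c z])
    also have "(\<Sum>j\<in>UNIV. \<bar>?z$j - c$j\<bar>) \<le> D"
      unfolding D_def by (rule sum_mono) (simp add: zp_nth)
    finally have E2: "\<bar>pd i f ?z - pd i f c\<bar> \<le> M * D" using M0 by (simp add: mult_left_mono)
    have tD: "\<bar>t\<bar> \<le> D" unfolding D_def t_def
      by (rule member_le_sum[where f="\<lambda>i. \<bar>x$i - c$i\<bar>"]) auto
    have E3: "\<bar>t * (pd i f ?z - pd i f c)\<bar> \<le> \<bar>t\<bar> * (M * D)"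
      unfolding abs_mult by (rule mult_left_mono[OF E2]) simp
    have E4: "M * t\<^sup>2 \<le> M * D * \<bar>t\<bar>"
    proof -
      have "t\<^sup>2 = \<bar>t\<bar> * \<bar>t\<bar>" by (simp add: power2_eq_square)
      also have "\<dots> \<le> D * \<bar>t\<bar>" by (rule mult_right_mono[OF tD]) simp
      finally show ?thesis using M0 by (simp add: mult_left_mono mult.assoc)
    qed
    have eq: "f (zp c x (insert i S)) - f c - (\<Sum>i\<in>insert i S. (x$i - c$i) * pd i f c)
      = (f ?z - f c - (\<Sum>i\<in>S. (x$i - c$i) * pd i f c))
        + (f (?z + t *\<^sub>R axis i 1) - f ?z - t * pd i f ?z) + t * (pd i f ?z - pd i f c)"
      using insert(1,2) unfolding zp_insert[OF insert(2)] by (simp add: t_def algebra_simps)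
    have "\<bar>f (zp c x (insert i S)) - f c - (\<Sum>i\<in>insert i S. (x$i - c$i) * pd i f c)\<bar>
       \<le> 2 * M * D * (\<Sum>i\<in>S. \<bar>x$i - c$i\<bar>) + M * D * \<bar>t\<bar> + \<bar>t\<bar> * (M * D)"
      unfolding eq using insert.IH E1 E3 E4 by linarith
    also have "\<dots> = 2 * M * D * (\<Sum>i\<in>insert i S. \<bar>x$i - c$i\<bar>)"
      using insert(1,2) by (simp add: t_def algebra_simps)
    finally show ?case .
  qed
  from this[of UNIV] show ?thesis by (simp add: D_def power2_eq_square)
qed


definition KK :: "nat \<Rightarrow> ('d::finite \<Rightarrow> nat) set" where
  "KK N = {k. \<forall>i. k i < N}"

lemma finite_KK: "finite (KK N :: ('d::finite \<Rightarrow> nat) set)"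
proof -
  have "KK N \<subseteq> PiE (UNIV::'d set) (\<lambda>_. {..<N})"
    by (auto simp: KK_def PiE_def Pi_def extensional_def)
  then show ?thesis by (rule finite_subset) (intro finite_PiE; simp)
qed

definition clo :: "nat \<Rightarrow> ('d::finite \<Rightarrow> nat) \<Rightarrow> real^'d" where
  "clo N k = (\<chi> i. real (k i) / real N)"
definition chi :: "nat \<Rightarrow> ('d::finite \<Rightarrow> nat) \<Rightarrow> real^'d" where
  "chi N k = (\<chi> i. (real (k i) + 1) / real N)"

lemma cell_cbox: "cell N k = cbox (clo N k) (chi N k)"
  by (auto simp: cell_def mem_box_cart clo_def chi_def)

lemma box_cell: "x \<in> box (clo N k) (chi N k) \<longleftrightarrow> (\<forall>i. real (k i) / real N < x$i \<and> x$i < (real (k i) + 1) / real N)"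
  by (simp add: mem_box_cart clo_def chi_def)

lemma center_nth: "center N k $ i = (real (k i) + 1/2) / real N"
  by (simp add: center_def)

lemma cell_center_dist:
  assumes "N \<ge> 1" "x \<in> cell N k"
  shows "\<bar>x$i - center N k $ i\<bar> \<le> 1 / (2 * real N)"
proof -
  have N: "real N > 0" using assms by simp
  have "real (k i) / real N \<le> x$i" "x$i \<le> (real (k i) + 1) / real N" using assms by (auto simp: cell_def)
  then have a: "real (k i) \<le> x$i * N" "x$i * N \<le> real (k i) + 1" using N by (auto simp: field_simps)
  have "\<bar>x$i - center N k $ i\<bar> = \<bar>x$i * N - (real (k i) + 1/2)\<bar> / N"
    using N by (simp add: center_nth field_simps)
  also have "\<dots> \<le> (1/2) / N"
  proof (rule divide_right_mono)
    show "\<bar>x$i * N - (real (k i) + 1/2)\<bar> \<le> 1/2" using a unfolding abs_le_iff by linarith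
  qed simp
  finally show ?thesis by simp
qed

lemma center_in_cell: "N \<ge> 1 \<Longrightarrow> center N k \<in> cell N k"
  by (auto simp: cell_def center_nth divide_right_mono)

lemma refl_in_cell:
  assumes "N \<ge> 1" "x \<in> cell N k"
  shows "2 *\<^sub>R center N k - x \<in> cell N k"
proof -
  have N: "real N > 0" using assms by simp
  { fix i
    have "real (k i) / real N \<le> x$i" "x$i \<le> (real (k i) + 1) / real N" using assms by (auto simp: cell_def)
    then have a: "real (k i) \<le> x$i * N" "x$i * N \<le> real (k i) + 1" using N by (auto simp: field_simps)
    have "real (k i) / real N \<le> 2 * ((real (k i) + 1/2) / real N) - x$i"
         "2 * ((real (k i) + 1/2) / real N) - x$i \<le> (real (k i) + 1) / real N"
      using a N by (auto simp: field_simps) }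
  then show ?thesis by (simp add: cell_def center_nth)
qed

lemma cell_sub_cube: "k \<in> KK N \<Longrightarrow> cell N k \<subseteq> unitcube"
proof
  fix x assume k: "k \<in> KK N" and x: "x \<in> cell N k"
  show "x \<in> unitcube" unfolding unitcube_def
  proof (intro CollectI allI conjI)
    fix i
    have ki: "k i < N" using k by (simp add: KK_def)
    have "real (k i) / real N \<le> x$i" "x$i \<le> (real (k i) + 1) / real N" using x by (auto simp: cell_def)
    moreover have "(real (k i) + 1) / real N \<le> 1" using ki by (simp add: field_simps)
    moreover have "0 \<le> real (k i) / real N" by simp
    ultimately show "0 \<le> x$i" "x$i \<le> 1" by linarith+
  qed
qed

lemma floor_idx:
  fixes t :: real
  assumes "N \<ge> 1" "0 \<le> t" "t \<le> 1"
  defines "j \<equiv> min (N - 1) (nat \<lfloor>t * N\<rfloor>)"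
  shows "j < N" "real j / real N \<le> t" "t \<le> (real j + 1) / real N"
proof -
  have N: "real N > 0" using assms by simp
  show "j < N" using assms(1) by (simp add: j_def)
  have f0: "0 \<le> \<lfloor>t * N\<rfloor>" using assms by simp
  have "real j \<le> t * N"
  proof -
    have "real j \<le> real (nat \<lfloor>t * N\<rfloor>)" by (simp add: j_def)
    also have "\<dots> = of_int \<lfloor>t * N\<rfloor>" using f0 by simp
    also have "\<dots> \<le> t * N" by simp
    finally show ?thesis .
  qed
  then show "real j / real N \<le> t" using N by (simp add: field_simps)
  have "t * N \<le> real j + 1"
  proof (cases "nat \<lfloor>t * N\<rfloor> \<le> N - 1")
    case True
    then have "j = nat \<lfloor>t * N\<rfloor>" by (simp add: j_def)
    then have "real j = of_int \<lfloor>t * N\<rfloor>" using f0 by simp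
    then show ?thesis by linarith
  next
    case False
    then have "j = N - 1" by (simp add: j_def)
    then have "real j + 1 = N" using assms(1) by simp
    then show ?thesis using assms N by (simp add: mult_left_le_one_le)
  qed
  then show "t \<le> (real j + 1) / real N" using N by (simp add: field_simps)
qed

lemma cube_covered:
  assumes "N \<ge> 1" "x \<in> unitcube"
  shows "\<exists>k\<in>KK N. x \<in> cell N k"
proof -
  define k where "k i = min (N - 1) (nat \<lfloor>x$i * N\<rfloor>)" for i
  have xi: "0 \<le> x$i" "x$i \<le> 1" for i using assms by (auto simp: unitcube_def)
  have "k \<in> KK N" using floor_idx(1)[OF assms(1) xi] by (simp add: KK_def k_def)
  moreover have "x \<in> cell N k"
    using floor_idx(2,3)[OF assms(1) xi] by (simp add: cell_def k_def)
  ultimately show ?thesis by blast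
qed

lemma box_cell_unique:
  assumes "N \<ge> 1" "x \<in> box (clo N k) (chi N k)" "x \<in> cell N k'"
  shows "k' = k"
proof
  fix i
  have N: "real N > 0" using assms by simp
  have "real (k i) / real N < x$i" "x$i < (real (k i) + 1) / real N" using assms(2) by (auto simp: box_cell)
  moreover have "real (k' i) / real N \<le> x$i" "x$i \<le> (real (k' i) + 1) / real N" using assms(3) by (auto simp: cell_def)
  ultimately have "real (k' i) / real N < (real (k i) + 1) / real N" "real (k i) / real N < (real (k' i) + 1) / real N"
    by linarith+
  then have "real (k' i) < real (k i) + 1" "real (k i) < real (k' i) + 1" using N by (auto simp: divide_strict_right_mono_neg field_simps)
  then show "k' i = k i" by linarith
qed

lemma cell_inj: "N \<ge> 1 \<Longrightarrow> inj_on (cell N) (KK N :: ('d::finite \<Rightarrow> nat) set)"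
proof (rule inj_onI)
  fix k k' :: "'d \<Rightarrow> nat" assume N: "N \<ge> 1" and eq: "cell N k = cell N k'"
  have N0: "real N > 0" using N by simp
  have x: "center N k \<in> box (clo N k) (chi N k)"
    unfolding box_cell center_nth using N0 by (auto simp: divide_strict_right_mono)
  then have "center N k \<in> cell N k" using box_subset_cbox cell_cbox by blast
  then show "k = k'" using box_cell_unique[OF N x] eq by metis
qed

lemma cells_division:
  assumes "N \<ge> 1"
  shows "(cell N ` KK N) division_of (unitcube :: (real^'d::finite) set)"
proof (rule division_ofI)
  show "finite (cell N ` KK N)" by (simp add: finite_KK)
  fix C assume "C \<in> cell N ` KK N"
  then obtain k where k: "k \<in> KK N" "C = cell N k" by blast
  show "C \<subseteq> unitcube" using cell_sub_cube k by simp
  show "C \<noteq> {}" using center_in_cell[OF assms] k by blast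
  show "\<exists>a b. C = cbox a b" using k cell_cbox by blast
next
  fix C1 C2 assume "C1 \<in> cell N ` KK N" "C2 \<in> cell N ` KK N" "C1 \<noteq> C2"
  then obtain k1 k2 where k: "C1 = cell N k1" "C2 = cell N k2" "k1 \<noteq> k2" by blast
  show "interior C1 \<inter> interior C2 = {}"
  proof (rule ccontr)
    assume "interior C1 \<inter> interior C2 \<noteq> {}"
    then obtain x where x1: "x \<in> box (clo N k1) (chi N k1)" and x2: "x \<in> box (clo N k2) (chi N k2)"
      using k by (auto simp: cell_cbox)
    have "x \<in> cell N k2" using x2 box_subset_cbox cell_cbox by blast
    then show False using box_cell_unique[OF assms x1] k by simp
  qed
next
  show "\<Union> (cell N ` KK N) = unitcube"
    using cube_covered[OF assms] cell_sub_cube by blast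
qed

lemma content_cell:
  assumes "N \<ge> 1"
  shows "measure lborel (cell N (k::'d::finite \<Rightarrow> nat)) = 1 / real N ^ CARD('d)"
proof -
  have "cell N k \<noteq> {}" using center_in_cell[OF assms] by blast
  then have "measure lborel (cell N k) = (\<Prod>i\<in>UNIV. chi N k $ i - clo N k $ i)"
    unfolding cell_cbox by (rule content_cbox_cart)
  also have "\<dots> = (\<Prod>i\<in>(UNIV::'d set). 1 / real N)"
    by (rule prod.cong) (auto simp: clo_def chi_def add_divide_distrib)
  finally show ?thesis by (simp add: power_one_over)
qed

lemma valid_assign_box:
  assumes "N \<ge> 1" "valid_assign N \<sigma>" "k \<in> KK N" "x \<in> box (clo N k) (chi N k)"
  shows "\<sigma> x = k"
proof -
  have "x \<in> cell N k" using assms(4) box_subset_cbox cell_cbox by blast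
  then have "x \<in> unitcube" using cell_sub_cube[OF assms(3)] by blast
  then have "x \<in> cell N (\<sigma> x)" using assms(2) by (simp add: valid_assign_def)
  then show ?thesis using box_cell_unique[OF assms(1,4)] by simp
qed

lemma valid_assign_KK: "valid_assign N \<sigma> \<Longrightarrow> x \<in> unitcube \<Longrightarrow> \<sigma> x \<in> KK N \<and> x \<in> cell N (\<sigma> x)"
  by (simp add: valid_assign_def KK_def)


lemma unitcube_lmeas: "unitcube \<in> sets lebesgue"
  unfolding unitcube_cbox by simp

lemma Zf_HK:
  assumes "(\<lambda>x. exp (h x)) integrable_on unitcube"
  shows "Zf h = integral unitcube (\<lambda>x. exp (h x))" "integrable muX (\<lambda>x. exp (h x))"
proof -
  have "(\<lambda>x. exp (h x)) absolutely_integrable_on unitcube"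
    by (rule nonnegative_absolutely_integrable_1[OF assms]) simp
  then have I: "integrable (lebesgue_on unitcube) (\<lambda>x. exp (h x))"
    by (rule absolutely_integrable_imp_integrable[OF _ unitcube_lmeas])
  then show "integrable muX (\<lambda>x. exp (h x))" by (simp add: muX_def)
  have "((\<lambda>x. exp (h x)) has_integral (integral\<^sup>L (lebesgue_on unitcube) (\<lambda>x. exp (h x)))) unitcube"
    by (rule has_integral_integral_lebesgue_on[OF I unitcube_lmeas])
  then show "Zf h = integral unitcube (\<lambda>x. exp (h x))"
    by (simp add: Zf_def muX_def integral_unique)
qed

lemma Z_sum:
  fixes F :: "real^'d::finite \<Rightarrow> real"
  assumes N: "N \<ge> 1" and F: "\<And>k. k \<in> KK N \<Longrightarrow> (F has_integral I k) (cell N k)"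
  shows "(F has_integral (\<Sum>k\<in>KK N. I k)) unitcube"
proof -
  have "(F has_integral (\<Sum>C\<in>cell N ` (KK N :: ('d \<Rightarrow> nat) set). integral C F)) unitcube"
  proof (rule has_integral_combine_division[OF cells_division[OF N]])
    fix C assume "C \<in> cell N ` (KK N :: ('d \<Rightarrow> nat) set)"
    then obtain k :: "'d \<Rightarrow> nat" where "k \<in> KK N" "C = cell N k" by blast
    then show "(F has_integral integral C F) C" using F integrable_integral integrable_on_def by blast
  qed
  also have "(\<Sum>C\<in>cell N ` (KK N :: ('d \<Rightarrow> nat) set). integral C F) = (\<Sum>k\<in>KK N. integral (cell N k) F)"
    by (rule sum.reindex[OF cell_inj[OF N], unfolded comp_def])
  also have "\<dots> = (\<Sum>k\<in>KK N. I k)"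
    by (rule sum.cong) (auto intro: integral_unique F)
  finally show ?thesis .
qed

lemma exp_cont_integrable:
  fixes f :: "real^'d::finite \<Rightarrow> real"
  assumes "continuous_on UNIV f"
  shows "(\<lambda>x. exp (f x)) integrable_on cell N k"
  unfolding cell_cbox
proof (rule integrable_continuous)
  have "continuous_on (cbox (clo N k) (chi N k)) f" using continuous_on_subset[OF assms] by blast
  then show "continuous_on (cbox (clo N k) (chi N k)) (\<lambda>x. exp (f x))" by (rule continuous_on_exp)
qed

lemma gn_cell_integral:
  assumes N: "N \<ge> 1" and va: "valid_assign N \<sigma>" and k: "k \<in> KK N"
  shows "((\<lambda>x. exp (gn N \<sigma> f x)) has_integral (measure lborel (cell N k) * exp (f (center N k)))) (cell N k)"
proof -
  have c: "((\<lambda>x. exp (f (center N k))) has_integral (measure lborel (cell N k) *\<^sub>R exp (f (center N k)))) (cell N k)"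
    unfolding cell_cbox by (rule has_integral_const)
  show ?thesis
  proof (rule has_integral_spike[OF negligible_frontier_interval[of "clo N k" "chi N k"] _ c[simplified]])
    fix x assume "x \<in> cell N k - (cbox (clo N k) (chi N k) - box (clo N k) (chi N k))"
    then have "x \<in> box (clo N k) (chi N k)" unfolding cell_cbox by blast
    then have "\<sigma> x = k" by (rule valid_assign_box[OF N va k])
    then show "exp (gn N \<sigma> f x) = exp (f (center N k))" by (simp add: gn_def)
  qed
qed

lemma refl_image:
  assumes N: "N \<ge> 1"
  shows "(\<lambda>x. (1 / (-1::real)) *\<^sub>R x + - ((1 / (-1::real)) *\<^sub>R (2 *\<^sub>R center N k))) ` cell N k = cell N k"
proof -
  have e: "(1 / (-1::real)) *\<^sub>R x + - ((1 / (-1::real)) *\<^sub>R (2 *\<^sub>R center N k)) = 2 *\<^sub>R center N k - x" for x :: "real^'a"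
    by (simp add: algebra_simps)
  show ?thesis unfolding e
  proof
    show "(\<lambda>x. 2 *\<^sub>R center N k - x) ` cell N k \<subseteq> cell N k" using refl_in_cell[OF N] by blast
    show "cell N k \<subseteq> (\<lambda>x. 2 *\<^sub>R center N k - x) ` cell N k"
    proof
      fix x assume x: "x \<in> cell N k"
      have "x = 2 *\<^sub>R center N k - (2 *\<^sub>R center N k - x)" by simp
      then show "x \<in> (\<lambda>x. 2 *\<^sub>R center N k - x) ` cell N k" using refl_in_cell[OF N x] by blast
    qed
  qed
qed

lemma refl_integral:
  fixes F :: "real^'d::finite \<Rightarrow> real"
  assumes N: "N \<ge> 1" and F: "(F has_integral I) (cell N k)"
  shows "((\<lambda>x. F (2 *\<^sub>R center N k - x)) has_integral I) (cell N k)"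
proof -
  have "((\<lambda>x. F ((-1) *\<^sub>R x + 2 *\<^sub>R center N k)) has_integral (1 / (\<bar>-1::real\<bar> ^ DIM(real^'d))) *\<^sub>R I)
     ((\<lambda>x. (1 / (-1::real)) *\<^sub>R x + - ((1 / (-1::real)) *\<^sub>R (2 *\<^sub>R center N k))) ` cbox (clo N k) (chi N k))"
    by (rule has_integral_affinity) (use F in \<open>auto simp: cell_cbox\<close>)
  then show ?thesis using refl_image[OF N, of k] by (simp add: cell_cbox algebra_simps)
qed

lemma sym_lower:
  fixes F G :: "real^'d::finite \<Rightarrow> real"
  assumes N: "N \<ge> 1" and F: "(F has_integral I) (cell N k)" and G: "(G has_integral J) (cell N k)"
    and le: "\<And>x. x \<in> cell N k \<Longrightarrow> G x \<le> (F x + F (2 *\<^sub>R center N k - x)) / 2"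
  shows "J \<le> I"
proof -
  have R: "((\<lambda>x. F (2 *\<^sub>R center N k - x)) has_integral I) (cell N k)" by (rule refl_integral[OF N F])
  have "((\<lambda>x. (F x + F (2 *\<^sub>R center N k - x)) / 2) has_integral (I + I) / 2) (cell N k)"
    by (intro has_integral_divide has_integral_add F R)
  then show ?thesis using has_integral_le[OF G _ le] by simp
qed

lemma sym_upper:
  fixes F G :: "real^'d::finite \<Rightarrow> real"
  assumes N: "N \<ge> 1" and F: "(F has_integral I) (cell N k)" and G: "(G has_integral J) (cell N k)"
    and le: "\<And>x. x \<in> cell N k \<Longrightarrow> (F x + F (2 *\<^sub>R center N k - x)) / 2 \<le> G x"
  shows "I \<le> J"
proof -
  have R: "((\<lambda>x. F (2 *\<^sub>R center N k - x)) has_integral I) (cell N k)" by (rule refl_integral[OF N F])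
  have "((\<lambda>x. (F x + F (2 *\<^sub>R center N k - x)) / 2) has_integral (I + I) / 2) (cell N k)"
    by (intro has_integral_divide has_integral_add F R)
  then show ?thesis using has_integral_le[OF _ G le] by simp
qed

definition sblo :: "nat \<Rightarrow> ('d::finite \<Rightarrow> nat) \<Rightarrow> 'd \<Rightarrow> real \<Rightarrow> real^'d" where
  "sblo N k i0 a = (\<chi> j. if j = i0 then (real (k j) + a) / real N else real (k j) / real N)"
definition sbhi :: "nat \<Rightarrow> ('d::finite \<Rightarrow> nat) \<Rightarrow> 'd \<Rightarrow> real \<Rightarrow> real^'d" where
  "sbhi N k i0 b = (\<chi> j. if j = i0 then (real (k j) + b) / real N else (real (k j) + 1) / real N)"

lemma sb_sub_cell:
  fixes k :: "'d::finite \<Rightarrow> nat"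
  assumes "N \<ge> 1" "0 \<le> a" "b \<le> 1"
  shows "cbox (sblo N k i0 a) (sbhi N k i0 b) \<subseteq> cell N k"
proof
  fix x assume x: "x \<in> cbox (sblo N k i0 a) (sbhi N k i0 b)"
  have N0: "real N > 0" using assms by simp
  show "x \<in> cell N k" unfolding cell_def
  proof (intro CollectI allI)
    fix j
    have "sblo N k i0 a $ j \<le> x$j" "x$j \<le> sbhi N k i0 b $ j" using x by (auto simp: mem_box_cart)
    moreover have "real (k j) / real N \<le> sblo N k i0 a $ j" "sbhi N k i0 b $ j \<le> (real (k j) + 1) / real N"
      using assms N0 by (auto simp: sblo_def sbhi_def divide_right_mono)
    ultimately show "real (k j) / real N \<le> x $ j \<and> x $ j \<le> (real (k j) + 1) / real N" by linarith
  qed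
qed

lemma sb_content:
  fixes k :: "'d::finite \<Rightarrow> nat"
  assumes "N \<ge> 1" "a \<le> b"
  shows "measure lborel (cbox (sblo N k i0 a) (sbhi N k i0 b)) = (b - a) * (1 / real N ^ CARD('d))"
proof -
  have N0: "real N > 0" using assms by simp
  have ne: "cbox (sblo N k i0 a) (sbhi N k i0 b) \<noteq> {}"
  proof -
    have "sblo N k i0 a \<in> cbox (sblo N k i0 a) (sbhi N k i0 b)"
      using assms N0 by (auto simp: mem_box_cart sblo_def sbhi_def divide_right_mono)
    then show ?thesis by blast
  qed
  have "measure lborel (cbox (sblo N k i0 a) (sbhi N k i0 b)) = (\<Prod>j\<in>UNIV. sbhi N k i0 b $ j - sblo N k i0 a $ j)"
    by (rule content_cbox_cart[OF ne])
  also have "\<dots> = (\<Prod>j\<in>(UNIV::'d set). (if j = i0 then b - a else 1) * (1 / real N))"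
    by (rule prod.cong) (auto simp: sblo_def sbhi_def diff_divide_distrib[symmetric])
  also have "\<dots> = (\<Prod>j\<in>(UNIV::'d set). (if j = i0 then b - a else 1)) * (\<Prod>j\<in>(UNIV::'d set). 1 / real N)"
    by (rule prod.distrib)
  also have "\<dots> = (b - a) * (1 / real N ^ CARD('d))"
    by (simp add: prod.delta power_one_over)
  finally show ?thesis .
qed

lemma sb_indicator_integral:
  fixes k :: "'d::finite \<Rightarrow> nat"
  assumes "N \<ge> 1" "0 \<le> a" "a \<le> b" "b \<le> 1"
  shows "((\<lambda>x. if x \<in> cbox (sblo N k i0 a) (sbhi N k i0 b) then c else 0) has_integral
            (c * ((b - a) * (1 / real N ^ CARD('d))))) (cell N k)"
proof -
  have "((\<lambda>x. c) has_integral (measure lborel (cbox (sblo N k i0 a) (sbhi N k i0 b)) *\<^sub>R c)) (cbox (sblo N k i0 a) (sbhi N k i0 b))"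
    by (rule has_integral_const)
  then have "((\<lambda>x. c) has_integral (c * ((b - a) * (1 / real N ^ CARD('d))))) (cbox (sblo N k i0 a) (sbhi N k i0 b))"
    using sb_content[OF assms(1,3), of k i0] by (simp only: real_scaleR_def mult.commute)
  then show ?thesis unfolding cell_cbox
    by (rule has_integral_restrict_closed_subintervals_eq[OF sb_sub_cell[OF assms(1,2,4), of k i0, unfolded cell_cbox], THEN iffD2])
qed

lemma mem_sb: "x \<in> cbox (sblo N k i0 a) (sbhi N k i0 b) \<longleftrightarrow>
   (\<forall>j. sblo N k i0 a $ j \<le> x$j \<and> x$j \<le> sbhi N k i0 b $ j)"
  by (simp add: mem_box_cart)


lemma avg_ge1: "1 \<le> (exp y + exp (- y)) / 2" for y :: real
proof -
  have "2 \<le> exp y + exp (-y)" using exp_ge_add_one_self[of y] exp_ge_add_one_self[of "-y"] by linarith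
  then show ?thesis by simp
qed

lemma avg_ge_abs: "exp \<bar>y\<bar> / 2 \<le> (exp y + exp (- y)) / 2" for y :: real
  by (cases "y \<ge> 0") auto

lemma exp_sq_lower: "(1 + y / 2)\<^sup>2 \<le> exp y" if "0 \<le> 1 + y / 2" for y :: real
proof -
  have "1 + y/2 \<le> exp (y/2)" by simp
  then have "(1 + y/2)\<^sup>2 \<le> (exp (y/2))\<^sup>2" using that by (rule power_mono)
  also have "(exp (y/2))\<^sup>2 = exp y" by (simp add: power2_eq_square exp_add[symmetric])
  finally show ?thesis .
qed

lemma exp_sq_lower4: "(2 + y)\<^sup>2 \<le> 4 * exp y" if "0 \<le> 2 + y" for y :: real
proof -
  have "0 \<le> 1 + y/2" using that by simp
  then have "(1 + y/2)\<^sup>2 \<le> exp y" by (rule exp_sq_lower)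
  moreover have "(2 + y)\<^sup>2 = 4 * (1 + y/2)\<^sup>2" by (simp add: power2_eq_square field_simps)
  ultimately show ?thesis by simp
qed

lemma avg_ge_quad: "1 + y\<^sup>2 / 8 \<le> (exp y + exp (- y)) / 2" for y :: real
proof -
  have main: "1 + t\<^sup>2 / 8 \<le> (exp t + exp (- t)) / 2" if t: "t \<ge> 0" for t :: real
  proof -
    have "(2 + t)\<^sup>2 \<le> 4 * exp t" using exp_sq_lower4[of t] t by simp
    then have a: "4 + 4 * t + t * t \<le> 4 * exp t" by (simp add: power2_eq_square algebra_simps)
    have b: "4 - 4 * t \<le> 4 * exp (-t)" using exp_ge_add_one_self[of "-t"] by simp
    have b2: "4 - 4 * t + t * t \<le> 4 * exp (-t)" if "t \<le> 2"
    proof -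
      have "(2 + - t)\<^sup>2 \<le> 4 * exp (- t)" using exp_sq_lower4[of "-t"] that by simp
      then show ?thesis by (simp add: power2_eq_square algebra_simps)
    qed
    have tt: "0 \<le> t * t" by simp
    have "8 + t * t \<le> 4 * exp t + 4 * exp (- t)"
    proof (cases "t \<le> 2")
      case True then show ?thesis using a b2[OF True] tt by linarith
    next
      case False then show ?thesis using a b tt by linarith
    qed
    moreover have "(exp t + exp (- t)) / 2 - (1 + t\<^sup>2 / 8) = (4 * exp t + 4 * exp (- t) - (8 + t * t)) / 8"
      by (simp add: power2_eq_square field_simps)
    ultimately show ?thesis by (smt (z3) divide_nonneg_pos)
  qed
  show ?thesis
  proof (cases "y \<ge> 0")
    case True then show ?thesis using main by blast
  next
    case False then show ?thesis using main[of "-y"] by (simp add: add.commute)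
  qed
qed

lemma exp_diff_bound: "\<bar>exp a - exp b\<bar> \<le> exp (max a b) * \<bar>a - b\<bar>" for a b :: real
proof -
  have "norm (exp a - exp b) \<le> exp (max a b) * norm (a - b)"
  proof (rule field_differentiable_bound[where S="closed_segment b a" and f=exp and f'=exp])
    fix z assume z: "z \<in> closed_segment b a"
    show "(exp has_field_derivative exp z) (at z within closed_segment b a)"
      by (rule has_field_derivative_at_within[OF DERIV_exp])
    have "z \<le> max a b" using z unfolding closed_segment_eq_real_ivl by (cases "b \<le> a") auto
    then show "norm (exp z) \<le> exp (max a b)" by simp
  qed (simp_all only: ends_in_segment convex_closed_segment)
  then show ?thesis by simp
qed
lemma avg_upper: "(exp y + exp (- y)) / 2 \<le> 1 + y\<^sup>2 * exp \<bar>y\<bar> / 2" for y :: real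
proof -
  have sq: "(exp y + exp (- y)) / 2 = 1 + (exp (y/2) - exp (-y/2))\<^sup>2 / 2"
  proof -
    have "(exp (y/2) - exp (-y/2))\<^sup>2 = exp (y/2) * exp (y/2) - 2 * (exp (y/2) * exp (-y/2)) + exp (-y/2) * exp (-y/2)"
      by (simp add: power2_eq_square algebra_simps)
    also have "\<dots> = exp y - 2 + exp (-y)" by (simp add: exp_add[symmetric])
    finally show ?thesis by (simp add: field_simps)
  qed
  have b: "\<bar>exp (y/2) - exp (-y/2)\<bar> \<le> exp (\<bar>y\<bar>/2) * \<bar>y\<bar>"
    using exp_diff_bound[of "y/2" "-y/2"] by (simp add: max_def abs_if split: if_splits)
  have "(exp (y/2) - exp (-y/2))\<^sup>2 \<le> (exp (\<bar>y\<bar>/2) * \<bar>y\<bar>)\<^sup>2"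
    using b by (metis abs_ge_zero power2_abs power_mono)
  also have "\<dots> = (exp (\<bar>y\<bar>/2))\<^sup>2 * \<bar>y\<bar>\<^sup>2" by (simp add: power_mult_distrib)
  also have "(exp (\<bar>y\<bar>/2))\<^sup>2 = exp \<bar>y\<bar>" by (simp add: power2_eq_square exp_add[symmetric])
  also have "\<bar>y\<bar>\<^sup>2 = y\<^sup>2" by simp
  finally have "(exp (y/2) - exp (-y/2))\<^sup>2 \<le> y\<^sup>2 * exp \<bar>y\<bar>" by (simp add: mult.commute)
  then show ?thesis unfolding sq by simp
qed

lemma ln_lower_half: "0 \<le> (a::real) \<Longrightarrow> a \<le> 1/2 \<Longrightarrow> a / 2 \<le> ln (1 + a)"
proof -
  assume a: "0 \<le> a" "a \<le> 1/2"
  have "a * a \<le> a * (1/2)" using a by (intro mult_left_mono) auto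
  then have "a / 2 \<le> a - a\<^sup>2" by (simp add: power2_eq_square)
  also have "\<dots> \<le> ln (1 + a)" using ln_one_plus_pos_lower_bound[of a] a by simp
  finally show ?thesis .
qed

definition vol :: "nat \<Rightarrow> 'd::finite itself \<Rightarrow> real" where
  "vol N (t::'d itself) = 1 / real N ^ CARD('d)"

lemma content_cell':
  fixes k :: "'d::finite \<Rightarrow> nat"
  assumes "N \<ge> 1"
  shows "measure lborel (cell N k) = 1 / real N ^ CARD('d)"
proof -
  have "cell N k \<noteq> {}" using center_in_cell[OF assms] by blast
  then have "measure lborel (cell N k) = (\<Prod>i\<in>UNIV. chi N k $ i - clo N k $ i)"
    unfolding cell_cbox by (rule content_cbox_cart)
  also have "\<dots> = (\<Prod>i\<in>(UNIV::'d set). 1 / real N)"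
    by (rule prod.cong) (auto simp: clo_def chi_def add_divide_distrib)
  finally show ?thesis by (simp add: power_one_over)
qed

lemma KK_ne: "N \<ge> 1 \<Longrightarrow> (\<lambda>_. 0) \<in> KK N"
  by (simp add: KK_def)

lemma Zg_formula:
  fixes f :: "real^'d::finite \<Rightarrow> real"
  assumes N: "N \<ge> 1" and va: "valid_assign N \<sigma>"
  shows "((\<lambda>x. exp (gn N \<sigma> f x)) has_integral (\<Sum>k\<in>KK N. (1 / real N ^ CARD('d)) * exp (f (center N k)))) unitcube"
proof -
  have "((\<lambda>x. exp (gn N \<sigma> f x)) has_integral (\<Sum>k\<in>KK N. measure lborel (cell N k) * exp (f (center N k)))) unitcube"
    by (rule Z_sum[OF N gn_cell_integral[OF N va]])
  moreover have "(\<Sum>k\<in>KK N. measure lborel (cell N k) * exp (f (center N k))) = (\<Sum>k\<in>KK N. (1 / real N ^ CARD('d)) * exp (f (center N k)))"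
    by (rule sum.cong) (simp_all add: content_cell'[OF N])
  ultimately show ?thesis by simp
qed

lemma Zg_props:
  fixes f :: "real^'d::finite \<Rightarrow> real"
  assumes N: "N \<ge> 1" and va: "valid_assign N \<sigma>"
  shows "Zf (gn N \<sigma> f) = (\<Sum>k\<in>KK N. (1 / real N ^ CARD('d)) * exp (f (center N k)))"
    "Zf (gn N \<sigma> f) > 0" "integrable muX (\<lambda>x. exp (gn N \<sigma> f x))"
proof -
  have I: "(\<lambda>x. exp (gn N \<sigma> f x)) integrable_on unitcube" using Zg_formula[OF N va] by blast
  show e: "Zf (gn N \<sigma> f) = (\<Sum>k\<in>KK N. (1 / real N ^ CARD('d)) * exp (f (center N k)))"
    using Zf_HK(1)[OF I] Zg_formula[OF N va] integral_unique by metis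
  show "integrable muX (\<lambda>x. exp (gn N \<sigma> f x))" using Zf_HK(2)[OF I] .
  have "(\<Sum>k\<in>KK N. (1 / real N ^ CARD('d)) * exp (f (center N k))) > 0"
    using N KK_ne[OF N] finite_KK by (intro sum_pos) auto
  then show "Zf (gn N \<sigma> f) > 0" using e by simp
qed

lemma Zf_props:
  fixes f :: "real^'d::finite \<Rightarrow> real"
  assumes N: "N \<ge> 1" and c: "continuous_on UNIV f"
  shows "Zf f = (\<Sum>k\<in>KK N. integral (cell N k) (\<lambda>x. exp (f x)))" "integrable muX (\<lambda>x. exp (f x))"
proof -
  have H: "((\<lambda>x. exp (f x)) has_integral (\<Sum>k\<in>KK N. integral (cell N k) (\<lambda>x. exp (f x)))) unitcube"
    by (rule Z_sum[OF N]) (rule integrable_integral[OF exp_cont_integrable[OF c]])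
  then have I: "(\<lambda>x. exp (f x)) integrable_on unitcube" by blast
  show "Zf f = (\<Sum>k\<in>KK N. integral (cell N k) (\<lambda>x. exp (f x)))"
    using Zf_HK(1)[OF I] H integral_unique by metis
  show "integrable muX (\<lambda>x. exp (f x))" using Zf_HK(2)[OF I] .
qed

lemma L_compare:
  fixes f :: "real^'d::finite \<Rightarrow> real"
  assumes N: "N \<ge> 1" and va: "valid_assign N \<sigma>" and c: "continuous_on UNIV f" and r1: "p1 > 0"
    and lo: "\<And>k::'d \<Rightarrow> nat. k \<in> KK N \<Longrightarrow> p1 * ((1 / real N ^ CARD('d)) * exp (f (center N k))) \<le> integral (cell N k) (\<lambda>x. exp (f x))"
    and hi: "\<And>k::'d \<Rightarrow> nat. k \<in> KK N \<Longrightarrow> integral (cell N k) (\<lambda>x. exp (f x)) \<le> p2 * ((1 / real N ^ CARD('d)) * exp (f (center N k)))"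
  shows "ln p1 \<le> Lf f - Lf (gn N \<sigma> f)" "Lf f - Lf (gn N \<sigma> f) \<le> ln p2"
proof -
  define Zg where "Zg = Zf (gn N \<sigma> f)"
  have Zg: "Zg = (\<Sum>k\<in>KK N. (1 / real N ^ CARD('d)) * exp (f (center N k)))" "Zg > 0"
    using Zg_props[OF N va, of f] by (auto simp: Zg_def)
  have Zf: "Zf f = (\<Sum>k\<in>KK N. integral (cell N k) (\<lambda>x. exp (f x)))" using Zf_props[OF N c] by simp
  have l: "p1 * Zg \<le> Zf f" unfolding Zg Zf sum_distrib_left by (rule sum_mono) (rule lo)
  have h: "Zf f \<le> p2 * Zg" unfolding Zg Zf sum_distrib_left by (rule sum_mono) (rule hi)
  have "0 < p1 * Zg" by (rule mult_pos_pos[OF r1 Zg(2)])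
  then have Zfpos: "Zf f > 0" using l by linarith
  then have "0 < p2 * Zg" using h by linarith
  then have r2: "p2 > 0" using Zg(2) by (simp add: zero_less_mult_iff)
  have eq: "Lf f - Lf (gn N \<sigma> f) = ln (Zf f / Zg)"
    using Zfpos Zg(2) by (simp add: Lf_def Zg_def ln_div)
  have q: "Zf f / Zg > 0" using Zfpos Zg(2) by simp
  have "p1 \<le> Zf f / Zg" using l Zg(2) by (simp add: pos_le_divide_eq)
  then show "ln p1 \<le> Lf f - Lf (gn N \<sigma> f)" unfolding eq
    using ln_le_cancel_iff[OF r1 q] by blast
  have "Zf f / Zg \<le> p2" using h Zg(2) by (simp add: pos_divide_le_eq)
  then show "Lf f - Lf (gn N \<sigma> f) \<le> ln p2" unfolding eq
    using ln_le_cancel_iff[OF q r2] by blast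
qed

lemma cell_lower:
  fixes f :: "real^'d::finite \<Rightarrow> real"
  assumes N: "N \<ge> 1" and c: "continuous_on UNIV f"
    and le: "\<And>x. x \<in> cell N k \<Longrightarrow>
      exp (f (center N k)) * (lo + (if x \<in> cbox (sblo N k i0 (3/4)) (sbhi N k i0 1) then a else 0))
        \<le> (exp (f x) + exp (f (2 *\<^sub>R center N k - x))) / 2"
  shows "(lo + a / 4) * ((1 / real N ^ CARD('d)) * exp (f (center N k))) \<le> integral (cell N k) (\<lambda>x. exp (f x))"
proof -
  define E where "E = exp (f (center N k))"
  have G: "((\<lambda>x. E * lo + (if x \<in> cbox (sblo N k i0 (3/4)) (sbhi N k i0 1) then E * a else 0)) has_integral
      (measure lborel (cell N k) *\<^sub>R (E * lo) + (E * a) * ((1 - 3/4) * (1 / real N ^ CARD('d))))) (cell N k)"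
    unfolding cell_cbox
    by (intro has_integral_add has_integral_const sb_indicator_integral[OF N, unfolded cell_cbox]) auto
  have "measure lborel (cell N k) *\<^sub>R (E * lo) + (E * a) * ((1 - 3/4) * (1 / real N ^ CARD('d)))
        \<le> integral (cell N k) (\<lambda>x. exp (f x))"
  proof (rule sym_lower[OF N integrable_integral[OF exp_cont_integrable[OF c]] G])
    fix x assume "x \<in> cell N k"
    from le[OF this] show "E * lo + (if x \<in> cbox (sblo N k i0 (3/4)) (sbhi N k i0 1) then E * a else 0)
        \<le> (exp (f x) + exp (f (2 *\<^sub>R center N k - x))) / 2"
      by (simp add: E_def distrib_left split: if_splits)
  qed
  moreover have "measure lborel (cell N k) *\<^sub>R (E * lo) + (E * a) * ((1 - 3/4) * (1 / real N ^ CARD('d)))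
     = (lo + a / 4) * ((1 / real N ^ CARD('d)) * E)"
    using content_cell'[OF N, of k] N by (simp add: field_simps)
  ultimately show ?thesis by (simp add: E_def)
qed

lemma cell_upper:
  fixes f :: "real^'d::finite \<Rightarrow> real"
  assumes N: "N \<ge> 1" and c: "continuous_on UNIV f"
    and le: "\<And>x. x \<in> cell N k \<Longrightarrow> (exp (f x) + exp (f (2 *\<^sub>R center N k - x))) / 2 \<le> exp (f (center N k)) * hi"
  shows "integral (cell N k) (\<lambda>x. exp (f x)) \<le> hi * ((1 / real N ^ CARD('d)) * exp (f (center N k)))"
proof -
  have G: "((\<lambda>x. exp (f (center N k)) * hi) has_integral (measure lborel (cell N k) *\<^sub>R (exp (f (center N k)) * hi))) (cell N k)"
    unfolding cell_cbox by (rule has_integral_const)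
  have "integral (cell N k) (\<lambda>x. exp (f x)) \<le> measure lborel (cell N k) *\<^sub>R (exp (f (center N k)) * hi)"
    by (rule sym_upper[OF N integrable_integral[OF exp_cont_integrable[OF c]] G le])
  then show ?thesis using content_cell'[OF N, of k] by (simp add: algebra_simps)
qed


lemma Pf_facts:
  fixes h :: "real^'d::finite \<Rightarrow> real"
  assumes I: "integrable muX (\<lambda>x. exp (h x))" and Z: "Zf h > 0"
  shows "(\<lambda>x. exp (h x) / Zf h) \<in> borel_measurable muX"
    "finite_measure (Pf h)"
    "null_sets (Pf h) = null_sets muX"
    "sets (Pf h) = sets muX" "space (Pf h) = space muX"
proof -
  have m: "(\<lambda>x. exp (h x)) \<in> borel_measurable muX" using I by (rule borel_measurable_integrable)
  then show m2: "(\<lambda>x. exp (h x) / Zf h) \<in> borel_measurable muX" by measurable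
  have m3: "(\<lambda>x. ennreal (exp (h x) / Zf h)) \<in> borel_measurable muX" using m2 by measurable
  have "emeasure (Pf h) (space (Pf h)) = (\<integral>\<^sup>+ x. ennreal (exp (h x) / Zf h) * indicator (space muX) x \<partial>muX)"
    unfolding Pf_def by (simp add: emeasure_density[OF m3])
  also have "\<dots> = (\<integral>\<^sup>+ x. ennreal (exp (h x) / Zf h) \<partial>muX)"
    by (rule nn_integral_cong) (simp add: indicator_def)
  also have "\<dots> = ennreal (\<integral> x. exp (h x) / Zf h \<partial>muX)"
  proof (rule nn_integral_eq_integral)
    show "integrable muX (\<lambda>x. exp (h x) / Zf h)" using I by simp
    show "AE x in muX. 0 \<le> exp (h x) / Zf h" using Z by (auto intro!: AE_I2)
  qed
  finally show "finite_measure (Pf h)" by (intro finite_measureI) simp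
  show "sets (Pf h) = sets muX" "space (Pf h) = space muX" by (simp_all add: Pf_def)
  show "null_sets (Pf h) = null_sets muX"
  proof (intro set_eqI iffI)
    fix A :: "(real^'d) set" assume "A \<in> null_sets (Pf h)"
    then have "A \<in> sets muX" "AE x in muX. x \<in> A \<longrightarrow> ennreal (exp (h x) / Zf h) = 0"
      unfolding Pf_def using null_sets_density_iff[OF m3] by auto
    then show "A \<in> null_sets muX" using Z by (simp add: AE_iff_null_sets)
  next
    fix A :: "(real^'d) set" assume A: "A \<in> null_sets muX"
    then have "AE x in muX. x \<notin> A" "A \<in> sets muX" using AE_iff_null_sets by blast+
    then show "A \<in> null_sets (Pf h)"
      unfolding Pf_def using null_sets_density_iff[OF m3] by (auto elim: AE_mp)
  qed
qed

lemma RN_Pf: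
  fixes h1 h2 :: "real^'d::finite \<Rightarrow> real"
  assumes I1: "integrable muX (\<lambda>x. exp (h1 x))" and Z1: "Zf h1 > 0"
    and I2: "integrable muX (\<lambda>x. exp (h2 x))" and Z2: "Zf h2 > 0"
  shows "AE x in Pf h2. RN_deriv (Pf h2) (Pf h1) x = ennreal (exp (h1 x - h2 x - (Lf h1 - Lf h2)))"
proof -
  note F1 = Pf_facts[OF I1 Z1] and F2 = Pf_facts[OF I2 Z2]
  interpret Q: finite_measure "Pf h2" using F2(2) .
  define r where "r x = ennreal (exp (h1 x - h2 x - (Lf h1 - Lf h2)))" for x
  have r_eq: "r x = ennreal ((exp (h1 x) / Zf h1) / (exp (h2 x) / Zf h2))" for x
  proof -
    have "exp (h1 x - h2 x - (Lf h1 - Lf h2)) = (exp (h1 x) / Zf h1) / (exp (h2 x) / Zf h2)"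
      using Z1 Z2 by (simp add: Lf_def exp_diff)
    then show ?thesis by (simp add: r_def)
  qed
  have rm: "r \<in> borel_measurable (Pf h2)"
    unfolding r_eq measurable_cong_sets[OF F2(4) refl] using F1(1) F2(1) by measurable
  have "density (Pf h2) r = Pf h1"
  proof -
    have m2: "(\<lambda>x. ennreal (exp (h2 x) / Zf h2)) \<in> borel_measurable muX" using F2(1) by measurable
    have rm': "r \<in> borel_measurable muX" using rm measurable_cong_sets[OF F2(4) refl] by blast
    have "density (Pf h2) r = density muX (\<lambda>x. ennreal (exp (h2 x) / Zf h2) * r x)"
      unfolding Pf_def by (rule density_density_eq[OF m2 rm'])
    also have "(\<lambda>x. ennreal (exp (h2 x) / Zf h2) * r x) = (\<lambda>x. ennreal (exp (h1 x) / Zf h1))"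
    proof
      fix x
      have "ennreal (exp (h2 x) / Zf h2) * r x = ennreal (exp (h2 x) / Zf h2 * ((exp (h1 x) / Zf h1) / (exp (h2 x) / Zf h2)))"
        unfolding r_eq using Z1 Z2 by (subst ennreal_mult) auto
      also have "\<dots> = ennreal (exp (h1 x) / Zf h1)" using Z2 by simp
      finally show "ennreal (exp (h2 x) / Zf h2) * r x = ennreal (exp (h1 x) / Zf h1)" .
    qed
    finally show ?thesis by (simp add: Pf_def)
  qed
  then have "AE x in Pf h2. r x = RN_deriv (Pf h2) (Pf h1) x" by (rule Q.RN_deriv_unique[OF rm])
  then show ?thesis by (auto simp: r_def elim: AE_mp)
qed

lemma D_eq_AE:
  fixes h1 h2 :: "real^'d::finite \<Rightarrow> real"
  assumes I1: "integrable muX (\<lambda>x. exp (h1 x))" and Z1: "Zf h1 > 0"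
    and I2: "integrable muX (\<lambda>x. exp (h2 x))" and Z2: "Zf h2 > 0"
  shows "D_suplog (Pf h1) (Pf h2) = esssup (Pf h2) (\<lambda>x. ereal \<bar>ln (enn2real (RN_deriv (Pf h2) (Pf h1) x))\<bar>)"
    "AE x in Pf h2. ereal \<bar>ln (enn2real (RN_deriv (Pf h2) (Pf h1) x))\<bar> = ereal \<bar>h1 x - h2 x - (Lf h1 - Lf h2)\<bar>"
    "(\<lambda>x. ereal \<bar>ln (enn2real (RN_deriv (Pf h2) (Pf h1) x))\<bar>) \<in> borel_measurable (Pf h2)"
proof -
  note F1 = Pf_facts[OF I1 Z1] and F2 = Pf_facts[OF I2 Z2]
  have "absolutely_continuous (Pf h1) (Pf h2)" "absolutely_continuous (Pf h2) (Pf h1)"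
    unfolding absolutely_continuous_def F1(3) F2(3) by simp_all
  then show "D_suplog (Pf h1) (Pf h2) = esssup (Pf h2) (\<lambda>x. ereal \<bar>ln (enn2real (RN_deriv (Pf h2) (Pf h1) x))\<bar>)"
    by (simp add: D_suplog_def)
  show "AE x in Pf h2. ereal \<bar>ln (enn2real (RN_deriv (Pf h2) (Pf h1) x))\<bar> = ereal \<bar>h1 x - h2 x - (Lf h1 - Lf h2)\<bar>"
    using RN_Pf[OF I1 Z1 I2 Z2] by (auto elim!: AE_mp)
  show "(\<lambda>x. ereal \<bar>ln (enn2real (RN_deriv (Pf h2) (Pf h1) x))\<bar>) \<in> borel_measurable (Pf h2)"
    by measurable
qed

lemma D_upper:
  fixes h1 h2 :: "real^'d::finite \<Rightarrow> real"
  assumes I1: "integrable muX (\<lambda>x. exp (h1 x))" and Z1: "Zf h1 > 0"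
    and I2: "integrable muX (\<lambda>x. exp (h2 x))" and Z2: "Zf h2 > 0"
    and b: "\<And>x. x \<in> unitcube \<Longrightarrow> \<bar>h1 x - h2 x - (Lf h1 - Lf h2)\<bar> \<le> e"
  shows "D_suplog (Pf h1) (Pf h2) \<le> ereal e"
proof -
  note D = D_eq_AE[OF I1 Z1 I2 Z2]
  note F2 = Pf_facts[OF I2 Z2]
  have "AE x in Pf h2. ereal \<bar>ln (enn2real (RN_deriv (Pf h2) (Pf h1) x))\<bar> \<le> ereal e"
    using D(2) AE_space[of "Pf h2"]
  proof eventually_elim
    case (elim x)
    then have "x \<in> unitcube" using F2(5) by (simp add: muX_def)
    then show ?case using elim b by simp
  qed
  then show ?thesis unfolding D(1) by (rule esssup_I[OF D(3)])
qed

lemma D_lower: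
  fixes h1 h2 :: "real^'d::finite \<Rightarrow> real"
  assumes I1: "integrable muX (\<lambda>x. exp (h1 x))" and Z1: "Zf h1 > 0"
    and I2: "integrable muX (\<lambda>x. exp (h2 x))" and Z2: "Zf h2 > 0"
    and S: "open S" "S \<noteq> {}" "S \<subseteq> unitcube"
    and b: "\<And>x. x \<in> S \<Longrightarrow> a \<le> \<bar>h1 x - h2 x - (Lf h1 - Lf h2)\<bar>"
  shows "ereal a \<le> D_suplog (Pf h1) (Pf h2)"
proof (rule ccontr)
  note D = D_eq_AE[OF I1 Z1 I2 Z2]
  note F2 = Pf_facts[OF I2 Z2]
  assume "\<not> ereal a \<le> D_suplog (Pf h1) (Pf h2)"
  then have lt: "D_suplog (Pf h1) (Pf h2) < ereal a" by simp
  have "AE x in Pf h2. x \<notin> S"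
    using D(2) esssup_AE[where M="Pf h2" and f="\<lambda>x. ereal \<bar>ln (enn2real (RN_deriv (Pf h2) (Pf h1) x))\<bar>"]
  proof eventually_elim
    case (elim x)
    then have "ereal \<bar>ln (enn2real (RN_deriv (Pf h2) (Pf h1) x))\<bar> < ereal a"
      using lt D(1) by (metis le_less_trans)
    then have "ereal \<bar>h1 x - h2 x - (Lf h1 - Lf h2)\<bar> < ereal a" using elim(1) by simp
    then show ?case using b by force
  qed
  have Sl: "S \<in> sets lebesgue" using S(1) by (simp add: borel_open)
  have Sm: "S \<in> sets muX" unfolding muX_def using Sl S(3) unitcube_lmeas by (subst sets_restrict_space_iff) auto
  then have "S \<in> null_sets (Pf h2)"
    using \<open>AE x in Pf h2. x \<notin> S\<close> F2(4) AE_iff_null_sets by metis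
  then have "S \<in> null_sets muX" using F2(3) by simp
  then have "AE x in muX. x \<notin> S" using AE_iff_null_sets Sm by blast
  then have "AE x in lebesgue. x \<in> unitcube \<longrightarrow> x \<notin> S"
    unfolding muX_def by (subst (asm) AE_restrict_space_iff) (use unitcube_lmeas in auto)
  then have "AE x in lebesgue. x \<notin> S" using S(3) by (auto elim: AE_mp)
  then have "S \<in> null_sets lebesgue" using AE_iff_null_sets Sl by blast
  then have "negligible S" by (simp add: negligible_iff_null_sets)
  then show False using open_not_negligible S(1,2) by blast
qed


lemma Fclass_facts1:
  fixes f :: "real^'d::finite \<Rightarrow> real"
  assumes f: "f \<in> Fclass m B" and m: "m \<ge> 1"
  shows "Ck 1 f" "continuous_on UNIV f" "\<And>x. x \<in> unitcube \<Longrightarrow> \<bar>f x\<bar> \<le> B"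
    "\<And>i z. z \<in> unitcube \<Longrightarrow> \<bar>pd i f z\<bar> \<le> B"
proof -
  have C: "Ck m f" and b: "\<And>is x. length is \<le> m \<Longrightarrow> x \<in> unitcube \<Longrightarrow> \<bar>pdl is f x\<bar> \<le> B"
    using f by (auto simp: Fclass_def)
  show "Ck 1 f" using Ck_le'[OF m C] .
  then show "continuous_on UNIV f" by (rule Ck_cont)
  show "\<And>x. x \<in> unitcube \<Longrightarrow> \<bar>f x\<bar> \<le> B" using b[of "[]"] by simp
  show "\<And>i z. z \<in> unitcube \<Longrightarrow> \<bar>pd i f z\<bar> \<le> B" using b[of "[i]" for i] m by simp
qed

lemma Fclass_facts2:
  fixes f :: "real^'d::finite \<Rightarrow> real"
  assumes f: "f \<in> Fclass m B" and m: "m \<ge> 2"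
  shows "Ck 2 f" "\<And>i j z. z \<in> unitcube \<Longrightarrow> \<bar>pd j (pd i f) z\<bar> \<le> B"
proof -
  have C: "Ck m f" and b: "\<And>is x. length is \<le> m \<Longrightarrow> x \<in> unitcube \<Longrightarrow> \<bar>pdl is f x\<bar> \<le> B"
    using f by (auto simp: Fclass_def)
  show "Ck 2 f" using Ck_le'[OF m C] .
  show "\<And>i j z. z \<in> unitcube \<Longrightarrow> \<bar>pd j (pd i f) z\<bar> \<le> B" using b[of "[j, i]" for i j] m by simp
qed

lemma cell_geom:
  fixes k :: "'d::finite \<Rightarrow> nat"
  assumes N: "N \<ge> 1" and k: "k \<in> KK N" and x: "x \<in> cell N k"
  shows "x \<in> unitcube" "center N k \<in> unitcube"
    "(\<Sum>i\<in>UNIV. \<bar>x$i - center N k $ i\<bar>) \<le> real CARD('d) / (2 * real N)"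
proof -
  show "x \<in> unitcube" using cell_sub_cube[OF k] x by blast
  show "center N k \<in> unitcube" using cell_sub_cube[OF k] center_in_cell[OF N] by blast
  have "(\<Sum>i\<in>UNIV. \<bar>x$i - center N k $ i\<bar>) \<le> of_nat (card (UNIV::'d set)) * (1 / (2 * real N))"
    by (rule sum_bounded_above) (rule cell_center_dist[OF N x])
  then show "(\<Sum>i\<in>UNIV. \<bar>x$i - center N k $ i\<bar>) \<le> real CARD('d) / (2 * real N)" by simp
qed

lemma Zf_pos_lower:
  fixes f :: "real^'d::finite \<Rightarrow> real"
  assumes N: "N \<ge> 1" and c: "continuous_on UNIV f" and p1: "p1 > 0"
    and lo: "\<And>k::'d \<Rightarrow> nat. k \<in> KK N \<Longrightarrow> p1 * ((1 / real N ^ CARD('d)) * exp (f (center N k))) \<le> integral (cell N k) (\<lambda>x. exp (f x))"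
  shows "Zf f > 0"
proof -
  have "0 < (\<Sum>k\<in>KK N. p1 * ((1 / real N ^ CARD('d)) * exp (f (center N k))))"
    using N KK_ne[OF N] finite_KK p1 by (intro sum_pos) auto
  also have "\<dots> \<le> (\<Sum>k\<in>KK N. integral (cell N k) (\<lambda>x. exp (f x)))" by (rule sum_mono) (rule lo)
  also have "\<dots> = Zf f" using Zf_props(1)[OF N c] by simp
  finally show ?thesis .
qed

lemma UB1:
  fixes f :: "real^'d::finite \<Rightarrow> real"
  assumes f: "f \<in> Fclass m B" and m: "m \<ge> 1" and N: "N \<ge> 1" and va: "valid_assign N \<sigma>"
  defines "e \<equiv> real CARD('d) * B / (2 * real N)"
  shows "\<And>x. x \<in> unitcube \<Longrightarrow> \<bar>f x - gn N \<sigma> f x\<bar> \<le> e"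
    "\<bar>Lf f - Lf (gn N \<sigma> f)\<bar> \<le> e"
    "D_suplog (Pf f) (Pf (gn N \<sigma> f)) \<le> ereal (2 * e)"
    "Zf f > 0" "integrable muX (\<lambda>x. exp (f x))"
proof -
  note F = Fclass_facts1[OF f m]
  have C1: "Ck (Suc 0) f" using F(1) by simp
  have cellb: "\<bar>f x - f (center N k)\<bar> \<le> e" if k: "k \<in> KK N" and x: "x \<in> cell N k" for k x
  proof -
    note G = cell_geom[OF N k x]
    have "\<bar>f x - f (center N k)\<bar> \<le> B * (\<Sum>i\<in>UNIV. \<bar>x$i - center N k $ i\<bar>)"
      by (rule lipschitz_cube[OF C1 F(4) G(2) G(1)])
    also have "\<dots> \<le> B * (real CARD('d) / (2 * real N))"
    proof (rule mult_left_mono[OF G(3)])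
      show "0 \<le> B" using F(3)[OF G(1)] by linarith
    qed
    finally show ?thesis by (simp add: e_def mult.commute)
  qed
  show pw: "\<bar>f x - gn N \<sigma> f x\<bar> \<le> e" if "x \<in> unitcube" for x
    using cellb valid_assign_KK[OF va that] by (simp add: gn_def)
  have lo: "exp (- e) * ((1 / real N ^ CARD('d)) * exp (f (center N k))) \<le> integral (cell N k) (\<lambda>x. exp (f x))"
    if k: "k \<in> KK N" for k
  proof -
    have "(exp (- e) + 0 / 4) * ((1 / real N ^ CARD('d)) * exp (f (center N k))) \<le> integral (cell N k) (\<lambda>x. exp (f x))"
    proof (rule cell_lower[OF N F(2)])
      fix x assume x: "x \<in> cell N k"
      have x': "2 *\<^sub>R center N k - x \<in> cell N k" by (rule refl_in_cell[OF N x])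
      have "exp (f (center N k)) * exp (- e) \<le> exp (f x)"
        using cellb[OF k x] by (simp add: exp_add[symmetric])
      moreover have "exp (f (center N k)) * exp (- e) \<le> exp (f (2 *\<^sub>R center N k - x))"
        using cellb[OF k x'] by (simp add: exp_add[symmetric])
      ultimately show "exp (f (center N k)) * (exp (- e) + (if x \<in> cbox (sblo N k i0 (3/4)) (sbhi N k i0 1) then 0 else 0))
          \<le> (exp (f x) + exp (f (2 *\<^sub>R center N k - x))) / 2" by simp
    qed
    then show ?thesis by simp
  qed
  have hi: "integral (cell N k) (\<lambda>x. exp (f x)) \<le> exp e * ((1 / real N ^ CARD('d)) * exp (f (center N k)))"
    if k: "k \<in> KK N" for k
  proof (rule cell_upper[OF N F(2)])
    fix x assume x: "x \<in> cell N k"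
    have x': "2 *\<^sub>R center N k - x \<in> cell N k" by (rule refl_in_cell[OF N x])
    have "exp (f x) \<le> exp (f (center N k)) * exp e"
      using cellb[OF k x] by (simp add: exp_add[symmetric])
    moreover have "exp (f (2 *\<^sub>R center N k - x)) \<le> exp (f (center N k)) * exp e"
      using cellb[OF k x'] by (simp add: exp_add[symmetric])
    ultimately show "(exp (f x) + exp (f (2 *\<^sub>R center N k - x))) / 2 \<le> exp (f (center N k)) * exp e" by simp
  qed
  have L: "ln (exp (- e)) \<le> Lf f - Lf (gn N \<sigma> f)" "Lf f - Lf (gn N \<sigma> f) \<le> ln (exp e)"
    using L_compare[OF N va F(2) _ lo hi] by auto
  then show Ld: "\<bar>Lf f - Lf (gn N \<sigma> f)\<bar> \<le> e" by simp
  show Zp: "Zf f > 0" by (rule Zf_pos_lower[OF N F(2) _ lo]) simp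
  show If: "integrable muX (\<lambda>x. exp (f x))" by (rule Zf_props(2)[OF N F(2)])
  have "\<bar>f x - gn N \<sigma> f x - (Lf f - Lf (gn N \<sigma> f))\<bar> \<le> 2 * e" if "x \<in> unitcube" for x
    using pw[OF that] Ld by linarith
  then show "D_suplog (Pf f) (Pf (gn N \<sigma> f)) \<le> ereal (2 * e)"
    by (rule D_upper[OF If Zp Zg_props(3)[OF N va] Zg_props(2)[OF N va]])
qed


lemma lin_refl:
  fixes c x :: "real^'d::finite"
  shows "(\<Sum>i\<in>UNIV. ((2 *\<^sub>R c - x)$i - c$i) * p i) = - (\<Sum>i\<in>UNIV. (x$i - c$i) * p i)"
  by (simp add: sum_negf[symmetric] algebra_simps)

lemma lin_bound:
  fixes c x :: "real^'d::finite"
  assumes "\<And>i. \<bar>p i\<bar> \<le> B"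
  shows "\<bar>\<Sum>i\<in>UNIV. (x$i - c$i) * p i\<bar> \<le> B * (\<Sum>i\<in>UNIV. \<bar>x$i - c$i\<bar>)"
proof -
  have "\<bar>\<Sum>i\<in>UNIV. (x$i - c$i) * p i\<bar> \<le> (\<Sum>i\<in>UNIV. \<bar>(x$i - c$i) * p i\<bar>)" by (rule sum_abs)
  also have "\<dots> \<le> (\<Sum>i\<in>UNIV. B * \<bar>x$i - c$i\<bar>)"
  proof (rule sum_mono)
    fix i
    have "\<bar>p i\<bar> * \<bar>x$i - c$i\<bar> \<le> B * \<bar>x$i - c$i\<bar>" by (rule mult_right_mono[OF assms abs_ge_zero])
    then show "\<bar>(x$i - c$i) * p i\<bar> \<le> B * \<bar>x$i - c$i\<bar>" by (simp add: abs_mult mult.commute)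
  qed
  finally show ?thesis by (simp add: sum_distrib_left)
qed

lemma UB2:
  fixes f :: "real^'d::finite \<Rightarrow> real"
  assumes f: "f \<in> Fclass m B" and m: "m \<ge> 2" and N: "N \<ge> 1" and va: "valid_assign N \<sigma>"
    and BN: "B \<le> real N"
  shows "\<bar>Lf f - Lf (gn N \<sigma> f)\<bar> \<le> (real CARD('d))\<^sup>2 * exp (real CARD('d)) * max B (B\<^sup>2) / (real N)\<^sup>2"
proof -
  define d where "d = real CARD('d)"
  define e2 where "e2 = 2 * B * (d / (2 * real N))\<^sup>2"
  define s where "s = B * (d / (2 * real N))"
  define K where "K = s\<^sup>2 * exp s / 2"
  note F = Fclass_facts1[OF f, of] and F2 = Fclass_facts2[OF f m]
  have m1: "m \<ge> 1" using m by simp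
  note F = Fclass_facts1[OF f m1]
  have B0: "B \<ge> 0" using F(3)[of 0] by (force simp: unitcube_def)
  have N0: "real N > 0" using N by simp
  have d0: "d \<ge> 0" by (simp add: d_def)
  have s0: "s \<ge> 0" using B0 d0 N0 by (simp add: s_def)
  have C2: "Ck (Suc (Suc 0)) f" using F2(1) by (simp add: numeral_2_eq_2)
  define l where "l c x = (\<Sum>i\<in>UNIV. (x$i - c$i) * pd i f c)" for c x :: "real^'d"
  have R: "\<bar>f y - f (center N k) - l (center N k) y\<bar> \<le> e2" if k: "k \<in> KK N" and y: "y \<in> cell N k" for k y
  proof -
    note G = cell_geom[OF N k y]
    have "\<bar>f y - f (center N k) - l (center N k) y\<bar> \<le> 2 * B * (\<Sum>i\<in>UNIV. \<bar>y$i - center N k $ i\<bar>)\<^sup>2"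
      unfolding l_def by (rule taylor2_cube[OF C2 F2(2) G(1,2)])
    also have "\<dots> \<le> e2" unfolding e2_def d_def
      using G(3) B0 by (intro mult_left_mono power_mono) auto
    finally show ?thesis .
  qed
  have lb: "\<bar>l (center N k) x\<bar> \<le> s" if k: "k \<in> KK N" and x: "x \<in> cell N k" for k x
  proof -
    note G = cell_geom[OF N k x]
    have "\<bar>l (center N k) x\<bar> \<le> B * (\<Sum>i\<in>UNIV. \<bar>x$i - center N k $ i\<bar>)"
      unfolding l_def by (rule lin_bound) (rule F(4)[OF G(2)])
    also have "\<dots> \<le> s" unfolding s_def d_def using G(3) B0 by (rule mult_left_mono)
    finally show ?thesis .
  qed
  have pw: "exp (f (center N k)) * exp (- e2) \<le> (exp (f x) + exp (f (2 *\<^sub>R center N k - x))) / 2 \<and>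
            (exp (f x) + exp (f (2 *\<^sub>R center N k - x))) / 2 \<le> exp (f (center N k)) * (exp e2 * (1 + K))"
    if k: "k \<in> KK N" and x: "x \<in> cell N k" for k x
  proof -
    define c where "c = center N k"
    define x' where "x' = 2 *\<^sub>R c - x"
    define t where "t = l c x"
    have x': "x' \<in> cell N k" unfolding x'_def c_def by (rule refl_in_cell[OF N x])
    have lx': "l c x' = - t" unfolding t_def l_def x'_def by (rule lin_refl)
    have r1: "\<bar>f x - f c - t\<bar> \<le> e2" using R[OF k x] by (simp add: c_def t_def)
    have r2: "\<bar>f x' - f c + t\<bar> \<le> e2" using R[OF k x'] lx' by (simp add: c_def)
    have tb: "\<bar>t\<bar> \<le> s" using lb[OF k x] by (simp add: t_def c_def)
    have u1: "exp (f x) \<le> exp (f c) * exp e2 * exp t"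
    proof -
      have "f x \<le> f c + e2 + t" using r1 by linarith
      then have "exp (f x) \<le> exp (f c + e2 + t)" by (simp only: exp_le_cancel_iff)
      then show ?thesis by (simp only: mult_exp_exp)
    qed
    have u2: "exp (f x') \<le> exp (f c) * exp e2 * exp (- t)"
    proof -
      have "f x' \<le> f c + e2 + - t" using r2 by linarith
      then have "exp (f x') \<le> exp (f c + e2 + - t)" by (simp only: exp_le_cancel_iff)
      then show ?thesis by (simp only: mult_exp_exp)
    qed
    have l1: "exp (f c) * exp (- e2) * exp t \<le> exp (f x)"
    proof -
      have "f c + - e2 + t \<le> f x" using r1 by linarith
      then have "exp (f c + - e2 + t) \<le> exp (f x)" by (simp only: exp_le_cancel_iff)
      then show ?thesis by (simp only: mult_exp_exp)
    qed
    have l2: "exp (f c) * exp (- e2) * exp (- t) \<le> exp (f x')"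
    proof -
      have "f c + - e2 + - t \<le> f x'" using r2 by linarith
      then have "exp (f c + - e2 + - t) \<le> exp (f x')" by (simp only: exp_le_cancel_iff)
      then show ?thesis by (simp only: mult_exp_exp)
    qed
    have A: "(exp t + exp (- t)) / 2 \<le> 1 + K"
    proof -
      have "(exp t + exp (- t)) / 2 \<le> 1 + t\<^sup>2 * exp \<bar>t\<bar> / 2" by (rule avg_upper)
      also have "t\<^sup>2 * exp \<bar>t\<bar> \<le> s\<^sup>2 * exp s"
      proof (rule mult_mono)
        show "t\<^sup>2 \<le> s\<^sup>2" using tb by (metis abs_ge_zero power2_abs power_mono)
        show "exp \<bar>t\<bar> \<le> exp s" using tb by simp
      qed simp_all
      finally show ?thesis by (simp add: K_def)
    qed
    have A1: "1 \<le> (exp t + exp (- t)) / 2" by (rule avg_ge1)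
    define E where "E = exp (f c)"
    have E0: "E > 0" by (simp add: E_def)
    have "(exp (f x) + exp (f x')) / 2 \<le> (E * exp e2 * exp t + E * exp e2 * exp (- t)) / 2"
      using u1 u2 by (simp add: E_def)
    also have "\<dots> = E * exp e2 * ((exp t + exp (- t)) / 2)" by (simp add: algebra_simps)
    also have "\<dots> \<le> E * exp e2 * (1 + K)" using A E0 by (intro mult_left_mono) auto
    finally have up: "(exp (f x) + exp (f x')) / 2 \<le> E * (exp e2 * (1 + K))" by (simp add: mult.assoc)
    have "E * exp (- e2) * 1 \<le> E * exp (- e2) * ((exp t + exp (- t)) / 2)"
      using A1 E0 by (intro mult_left_mono) auto
    also have "\<dots> = (E * exp (- e2) * exp t + E * exp (- e2) * exp (- t)) / 2" by (simp add: algebra_simps)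
    also have "\<dots> \<le> (exp (f x) + exp (f x')) / 2" using l1 l2 by (simp add: E_def)
    finally have down: "E * exp (- e2) \<le> (exp (f x) + exp (f x')) / 2" by simp
    show ?thesis using up down by (simp add: E_def c_def x'_def)
  qed
  have lo: "exp (- e2) * ((1 / real N ^ CARD('d)) * exp (f (center N k))) \<le> integral (cell N k) (\<lambda>x. exp (f x))"
    if k: "k \<in> KK N" for k
  proof -
    have "(exp (- e2) + 0 / 4) * ((1 / real N ^ CARD('d)) * exp (f (center N k))) \<le> integral (cell N k) (\<lambda>x. exp (f x))"
    proof (rule cell_lower[OF N F(2)])
      fix x assume x: "x \<in> cell N k"
      show "exp (f (center N k)) * (exp (- e2) + (if x \<in> cbox (sblo N k i0 (3/4)) (sbhi N k i0 1) then 0 else 0))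
          \<le> (exp (f x) + exp (f (2 *\<^sub>R center N k - x))) / 2" using pw[OF k x] by simp
    qed
    then show ?thesis by simp
  qed
  have hi: "integral (cell N k) (\<lambda>x. exp (f x)) \<le> (exp e2 * (1 + K)) * ((1 / real N ^ CARD('d)) * exp (f (center N k)))"
    if k: "k \<in> KK N" for k
    by (rule cell_upper[OF N F(2)]) (use pw[OF k] in blast)
  have L: "ln (exp (- e2)) \<le> Lf f - Lf (gn N \<sigma> f)" "Lf f - Lf (gn N \<sigma> f) \<le> ln (exp e2 * (1 + K))"
    using L_compare[OF N va F(2) _ lo hi] by auto
  have K0: "K \<ge> 0" by (simp add: K_def)
  have "ln (exp e2 * (1 + K)) = e2 + ln (1 + K)" using K0 by (simp add: ln_mult)
  also have "ln (1 + K) \<le> K" using K0 by (rule ln_add_one_self_le_self)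
  finally have Lu: "Lf f - Lf (gn N \<sigma> f) \<le> e2 + K" using L(2) by linarith
  have Ll: "- e2 \<le> Lf f - Lf (gn N \<sigma> f)" using L(1) by simp
  have e20: "e2 \<ge> 0" using B0 by (simp add: e2_def)
  have abs_le: "\<bar>Lf f - Lf (gn N \<sigma> f)\<bar> \<le> e2 + K" using Lu Ll K0 by linarith
  define M where "M = max B (B\<^sup>2)"
  have BM: "B \<le> M" "B\<^sup>2 \<le> M" by (simp_all add: M_def)
  have sd: "s \<le> d"
  proof -
    have "s = (B / real N) * (d / 2)" by (simp add: s_def)
    also have "\<dots> \<le> 1 * (d / 2)" using BN N0 B0 d0 by (intro mult_right_mono) auto
    finally show ?thesis using d0 by simp
  qed
  have ed: "exp d \<ge> 1" using d0 by simp
  have e2b: "e2 \<le> d\<^sup>2 * exp d * M / (real N)\<^sup>2 / 2"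
  proof -
    have "e2 = B * d\<^sup>2 / (real N)\<^sup>2 / 2" by (simp add: e2_def power2_eq_square field_simps)
    also have "\<dots> \<le> (M * (d\<^sup>2 * exp d)) / (real N)\<^sup>2 / 2"
    proof -
      have "B * d\<^sup>2 \<le> M * (d\<^sup>2 * exp d)"
      proof (rule mult_mono)
        show "d\<^sup>2 \<le> d\<^sup>2 * exp d" using mult_left_mono[OF ed, of "d\<^sup>2"] by simp
      qed (use BM(1) B0 in auto)
      then show ?thesis by (intro divide_right_mono) auto
    qed
    finally show ?thesis by (simp add: algebra_simps)
  qed
  have Kb: "K \<le> d\<^sup>2 * exp d * M / (real N)\<^sup>2 / 8"
  proof -
    have "K = B\<^sup>2 * d\<^sup>2 * exp s / (real N)\<^sup>2 / 8" by (simp add: K_def s_def power2_eq_square field_simps)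
    also have "\<dots> \<le> M * (d\<^sup>2 * exp d) / (real N)\<^sup>2 / 8"
    proof -
      have "B\<^sup>2 * (d\<^sup>2 * exp s) \<le> M * (d\<^sup>2 * exp d)"
        using BM(2) sd B0 by (intro mult_mono) (auto simp: M_def)
      then show ?thesis by (intro divide_right_mono) (auto simp: mult.assoc)
    qed
    finally show ?thesis by (simp add: algebra_simps)
  qed
  have Q: "0 \<le> d\<^sup>2 * exp d * M / (real N)\<^sup>2" using B0 by (simp add: M_def)
  have "e2 + K \<le> d\<^sup>2 * exp d * M / (real N)\<^sup>2"
  proof -
    define Q where "Q = d\<^sup>2 * exp d * M / (real N)\<^sup>2"
    have "e2 \<le> Q / 2" "K \<le> Q / 8" "0 \<le> Q" using e2b Kb Q by (simp_all add: Q_def)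
    then have "e2 + K \<le> Q" by (simp add: field_simps)
    then show ?thesis by (simp add: Q_def)
  qed
  then show ?thesis using abs_le by (simp add: d_def M_def)
qed


lemma axis_nth_add: "(x + t *\<^sub>R axis i 1) $ i0 = x $ i0 + (if i0 = i then t else 0)"
  by (simp add: axis_def)

lemma pd_const: "pd i (\<lambda>x::real^'d::finite. c) = (\<lambda>x. 0)"
  by (rule ext) (simp add: pd_def)

lemma coord_deriv:
  fixes x :: "real^'d::finite"
  assumes D: "\<And>t. (g has_real_derivative g' t) (at t)"
  shows "((\<lambda>t. g ((x + t *\<^sub>R axis i (1::real)) $ i0)) has_real_derivative (if i = i0 then g' (s + x $ i0) else 0)) (at s)"
proof (cases "i = i0")
  case True
  have "((\<lambda>t. g (t + x $ i0)) has_real_derivative g' (s + x $ i0)) (at s)"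
    using D[of "s + x$i0"] DERIV_shift[of g "g' (s + x$i0)" s "x$i0"] by simp
  then show ?thesis using True by (simp add: axis_nth_add add.commute)
next
  case False
  then have "i0 \<noteq> i" by blast
  then show ?thesis using False by (simp add: axis_def)
qed

lemma pd_coord:
  fixes i0 :: "'d::finite"
  assumes D: "\<And>t. (g has_real_derivative g' t) (at t)"
  shows "pd i (\<lambda>x::real^'d. g (x $ i0)) = (\<lambda>x. if i = i0 then g' (x $ i0) else 0)"
proof
  fix x :: "real^'d"
  have "((\<lambda>t. g ((x + t *\<^sub>R axis i (1::real)) $ i0)) has_real_derivative (if i = i0 then g' (0 + x $ i0) else 0)) (at 0)"
    by (rule coord_deriv[OF D])
  then show "pd i (\<lambda>x. g (x $ i0)) x = (if i = i0 then g' (x $ i0) else 0)"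
    unfolding pd_def by (simp add: DERIV_imp_deriv)
qed

lemma Ck_const: "Ck m (\<lambda>x::real^'d::finite. c)"
proof (induction m arbitrary: c)
  case 0 then show ?case by simp
next
  case (Suc m) then show ?case by (simp add: pd_const)
qed

lemma Ck_coord:
  fixes i0 :: "'d::finite"
  assumes D: "\<And>n t. (\<phi> n has_real_derivative \<phi> (Suc n) t) (at t)"
  shows "Ck m (\<lambda>x::real^'d. \<phi> n (x $ i0))"
proof (induction m arbitrary: n)
  case 0
  have "continuous_on UNIV (\<phi> n)"
    using D by (meson DERIV_isCont continuous_at_imp_continuous_on)
  then have "continuous_on UNIV (\<lambda>x::real^'d. \<phi> n (x $ i0))"
    by (rule continuous_on_compose2[where f="\<lambda>x::real^'d. x $ i0"]) (auto intro: continuous_intros)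
  then show ?case by simp
next
  case (Suc m)
  have "continuous_on UNIV (\<phi> n)"
    using D by (meson DERIV_isCont continuous_at_imp_continuous_on)
  then have c: "continuous_on UNIV (\<lambda>x::real^'d. \<phi> n (x $ i0))"
    by (rule continuous_on_compose2[where f="\<lambda>x::real^'d. x $ i0"]) (auto intro: continuous_intros)
  have d: "(\<lambda>t. \<phi> n ((x + t *\<^sub>R axis i 1) $ i0)) differentiable (at 0)" for i and x :: "real^'d"
    using coord_deriv[OF D[of n], of x i i0 0] real_differentiable_def by blast
  have p: "Ck m (pd i (\<lambda>x::real^'d. \<phi> n (x $ i0)))" for i
  proof (cases "i = i0")
    case True
    then show ?thesis unfolding pd_coord[OF D[of n]] using Suc.IH by simp
  next
    case False
    then show ?thesis unfolding pd_coord[OF D[of n]] using Ck_const by simp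
  qed
  show ?case using c d p by simp
qed

lemma pdl_coord:
  fixes i0 :: "'d::finite"
  assumes D: "\<And>n t. (\<phi> n has_real_derivative \<phi> (Suc n) t) (at t)"
  shows "pdl is (\<lambda>x::real^'d. \<phi> 0 (x $ i0)) = (\<lambda>x. if set is \<subseteq> {i0} then \<phi> (length is) (x $ i0) else 0)"
proof (induction "is")
  case Nil then show ?case by simp
next
  case (Cons i "is")
  show ?case
  proof (cases "set is \<subseteq> {i0}")
    case True
    then have "pdl (i # is) (\<lambda>x::real^'d. \<phi> 0 (x $ i0)) = pd i (\<lambda>x. \<phi> (length is) (x $ i0))"
      using Cons by simp
    also have "\<dots> = (\<lambda>x. if i = i0 then \<phi> (Suc (length is)) (x $ i0) else 0)" by (rule pd_coord[OF D])
    finally show ?thesis using True by auto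
  next
    case False
    then have "pdl (i # is) (\<lambda>x::real^'d. \<phi> 0 (x $ i0)) = pd i (\<lambda>x. 0)"
      using Cons by simp
    then show ?thesis using False by (simp add: pd_const)
  qed
qed

lemma coord_Fclass:
  fixes i0 :: "'d::finite"
  assumes D: "\<And>n t. (\<phi> n has_real_derivative \<phi> (Suc n) t) (at t)"
    and B: "B \<ge> 0" and b: "\<And>n t. n \<le> m \<Longrightarrow> 0 \<le> t \<Longrightarrow> t \<le> 1 \<Longrightarrow> \<bar>\<phi> n t\<bar> \<le> B"
  shows "(\<lambda>x::real^'d. \<phi> 0 (x $ i0)) \<in> Fclass m B"
  unfolding Fclass_def
proof (intro CollectI conjI allI impI ballI)
  show "Ck m (\<lambda>x::real^'d. \<phi> 0 (x $ i0))" by (rule Ck_coord) (rule D)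
  fix "is" :: "'d list" and x :: "real^'d" assume l: "length is \<le> m" and x: "x \<in> unitcube"
  have t: "0 \<le> x $ i0" "x $ i0 \<le> 1" using x by (auto simp: unitcube_def)
  show "\<bar>pdl is (\<lambda>x. \<phi> 0 (x $ i0)) x\<bar> \<le> B"
    unfolding pdl_coord[where \<phi>=\<phi>, OF D] using b[OF l t] B by simp
qed


lemma L_lower:
  fixes f :: "real^'d::finite \<Rightarrow> real"
  assumes N: "N \<ge> 1" and va: "valid_assign N \<sigma>" and c: "continuous_on UNIV f" and r1: "p1 > 0"
    and lo: "\<And>k::'d \<Rightarrow> nat. k \<in> KK N \<Longrightarrow> p1 * ((1 / real N ^ CARD('d)) * exp (f (center N k))) \<le> integral (cell N k) (\<lambda>x. exp (f x))"
  shows "ln p1 \<le> Lf f - Lf (gn N \<sigma> f)"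
proof -
  define Zg where "Zg = Zf (gn N \<sigma> f)"
  have Zg: "Zg = (\<Sum>k\<in>KK N. (1 / real N ^ CARD('d)) * exp (f (center N k)))" "Zg > 0"
    using Zg_props[OF N va, of f] by (auto simp: Zg_def)
  have Zf: "Zf f = (\<Sum>k\<in>KK N. integral (cell N k) (\<lambda>x. exp (f x)))" using Zf_props[OF N c] by simp
  have l: "p1 * Zg \<le> Zf f" unfolding Zg Zf sum_distrib_left by (rule sum_mono) (rule lo)
  have "0 < p1 * Zg" by (rule mult_pos_pos[OF r1 Zg(2)])
  then have Zfpos: "Zf f > 0" using l by linarith
  have eq: "Lf f - Lf (gn N \<sigma> f) = ln (Zf f / Zg)"
    using Zfpos Zg(2) by (simp add: Lf_def Zg_def ln_div)
  have q: "Zf f / Zg > 0" using Zfpos Zg(2) by simp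
  have "p1 \<le> Zf f / Zg" using l Zg(2) by (simp add: pos_le_divide_eq)
  then show "ln p1 \<le> Lf f - Lf (gn N \<sigma> f)" unfolding eq
    using ln_le_cancel_iff[OF r1 q] by blast
qed

definition c1 :: "real \<Rightarrow> nat \<Rightarrow> real \<Rightarrow> real" where
  "c1 B n t = (if n = 0 then B * t else if n = 1 then B else 0)"
definition c2 :: "real \<Rightarrow> nat \<Rightarrow> real \<Rightarrow> real" where
  "c2 B n t = (if n = 0 then B * t\<^sup>2 / 2 else if n = 1 then B * t else if n = 2 then B else 0)"
definition c3 :: "real \<Rightarrow> real \<Rightarrow> nat \<Rightarrow> real \<Rightarrow> real" where
  "c3 A w n t = (if n = 0 then A else 0) + A * w ^ n * cos (w * t + real n * pi / 2)"

lemma c1_deriv: "(c1 B n has_real_derivative c1 B (Suc n) t) (at t)"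
proof -
  consider "n = 0" | "n = 1" | "n \<ge> 2" by linarith
  then show ?thesis
  proof cases
    case 1
    have "((\<lambda>t. B * t) has_real_derivative B) (at t)" by (auto intro!: derivative_eq_intros)
    then show ?thesis using 1 by (simp add: c1_def[abs_def])
  next
    case 2 then show ?thesis by (simp add: c1_def[abs_def])
  next
    case 3 then show ?thesis by (simp add: c1_def[abs_def])
  qed
qed

lemma c2_deriv: "(c2 B n has_real_derivative c2 B (Suc n) t) (at t)"
proof -
  consider "n = 0" | "n = 1" | "n = 2" | "n \<ge> 3" by linarith
  then show ?thesis
  proof cases
    case 1
    have "((\<lambda>t. B * t\<^sup>2 / 2) has_real_derivative B * t) (at t)"
      by (auto intro!: derivative_eq_intros)
    then show ?thesis using 1 by (simp add: c2_def[abs_def])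
  next
    case 2
    have "((\<lambda>t. B * t) has_real_derivative B) (at t)" by (auto intro!: derivative_eq_intros)
    then show ?thesis using 2 by (simp add: c2_def[abs_def])
  next
    case 3 then show ?thesis by (simp add: c2_def[abs_def])
  next
    case 4 then show ?thesis by (simp add: c2_def[abs_def])
  qed
qed

lemma cos_shift_half: "cos (x + pi / 2) = - sin x"
  by (simp add: cos_add)

lemma c3_deriv: "(c3 A w n has_real_derivative c3 A w (Suc n) t) (at t)"
proof -
  have "((\<lambda>t. (if n = 0 then A else 0) + A * w ^ n * cos (w * t + real n * pi / 2)) has_real_derivative
      A * w ^ n * (- sin (w * t + real n * pi / 2) * w)) (at t)"
    by (auto intro!: derivative_eq_intros)
  moreover have "A * w ^ n * (- sin (w * t + real n * pi / 2) * w) = c3 A w (Suc n) t"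
  proof -
    have "cos (w * t + real (Suc n) * pi / 2) = cos ((w * t + real n * pi / 2) + pi / 2)"
      by (simp add: distrib_right add_divide_distrib algebra_simps)
    also have "\<dots> = - sin (w * t + real n * pi / 2)" by (rule cos_shift_half)
    finally show ?thesis by (simp add: c3_def)
  qed
  ultimately show ?thesis by (simp add: c3_def[abs_def])
qed


lemma S_u:
  fixes k :: "'d::finite \<Rightarrow> nat"
  assumes N: "N \<ge> 1" and x: "x \<in> cbox (sblo N k i0 (3/4)) (sbhi N k i0 1)"
  shows "1 / (4 * real N) \<le> x $ i0 - center N k $ i0" "x $ i0 \<le> (real (k i0) + 1) / real N"
    "(real (k i0) + 3/4) / real N \<le> x $ i0"
proof -
  have "\<forall>j. sblo N k i0 (3/4) $ j \<le> x$j \<and> x$j \<le> sbhi N k i0 1 $ j" using x mem_sb by blast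
  then have "sblo N k i0 (3/4) $ i0 \<le> x$i0 \<and> x$i0 \<le> sbhi N k i0 1 $ i0" by blast
  then have a: "(real (k i0) + 3/4) / real N \<le> x $ i0" "x $ i0 \<le> (real (k i0) + 1) / real N"
    by (simp_all add: sblo_def sbhi_def)
  have e: "(real (k i0) + 3/4) / real N - center N k $ i0 = 1 / (4 * real N)"
    using N by (simp add: center_nth field_simps)
  show "1 / (4 * real N) \<le> x $ i0 - center N k $ i0" using a e by linarith
  show "x $ i0 \<le> (real (k i0) + 1) / real N" "(real (k i0) + 3/4) / real N \<le> x $ i0" using a by auto
qed

lemma refl_coord:
  fixes c x :: "real^'d::finite"
  shows "(2 *\<^sub>R c - x) $ i0 - c $ i0 = - (x $ i0 - c $ i0)"
  by (simp add: algebra_simps)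

lemma W1_lower:
  fixes i0 :: "'d::finite"
  assumes N: "N \<ge> 1" and va: "valid_assign N \<sigma>" and B: "B \<ge> 0"
  defines "f \<equiv> (\<lambda>x::real^'d. c1 B 0 (x $ i0))"
  defines "t \<equiv> B / (4 * real N)"
  defines "a \<equiv> max (exp t / 2) (1 + t\<^sup>2 / 8) - 1"
  shows "ln (1 + a / 4) \<le> Lf f - Lf (gn N \<sigma> f)"
proof (rule L_lower[OF N va])
  show "continuous_on UNIV f" unfolding f_def by (rule Ck_cont[OF Ck_coord[where \<phi>="c1 B" and m=0 and n=0, OF c1_deriv]])
  have "1 + t\<^sup>2 / 8 \<le> max (exp t / 2) (1 + t\<^sup>2 / 8)" by (rule max.cobounded2)
  then have a0: "a \<ge> t\<^sup>2 / 8" unfolding a_def by (simp only: le_diff_eq add.commute)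
  then show "1 + a / 4 > 0" by (smt (z3) zero_le_power2 divide_nonneg_pos)
  fix k :: "'d \<Rightarrow> nat" assume k: "k \<in> KK N"
  have "(1 + a / 4) * ((1 / real N ^ CARD('d)) * exp (f (center N k))) \<le> integral (cell N k) (\<lambda>x. exp (f x))"
  proof (rule cell_lower[OF N])
    show "continuous_on UNIV f" unfolding f_def by (rule Ck_cont[OF Ck_coord[where \<phi>="c1 B" and m=0 and n=0, OF c1_deriv]])
    fix x assume x: "x \<in> cell N k"
    define c where "c = center N k"
    define u where "u = x $ i0 - c $ i0"
    have fx: "f x = f c + B * u" and fx': "f (2 *\<^sub>R c - x) = f c + - (B * u)"
      by (simp_all add: f_def c1_def u_def algebra_simps)
    have avg: "(exp (f x) + exp (f (2 *\<^sub>R c - x))) / 2 = exp (f c) * ((exp (B * u) + exp (- (B * u))) / 2)"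
      unfolding fx fx' by (simp add: exp_add exp_diff exp_minus field_simps)
    have E0: "exp (f c) > 0" by simp
    have base: "exp (f c) * 1 \<le> exp (f c) * ((exp (B * u) + exp (- (B * u))) / 2)"
      using avg_ge1 E0 by (intro mult_left_mono) auto
    have onS: "exp (f c) * (1 + a) \<le> exp (f c) * ((exp (B * u) + exp (- (B * u))) / 2)"
      if S: "x \<in> cbox (sblo N k i0 (3/4)) (sbhi N k i0 1)"
    proof -
      have u: "1 / (4 * real N) \<le> u" using S_u(1)[OF N S] by (simp add: u_def c_def)
      have tBu: "t \<le> B * u" unfolding t_def using mult_left_mono[OF u B] by simp
      have t0: "0 \<le> t" using B N by (simp add: t_def)
      have "exp t / 2 \<le> (exp (B * u) + exp (- (B * u))) / 2"
      proof -
        have "exp t \<le> exp \<bar>B * u\<bar>" using tBu by simp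
        then show ?thesis using avg_ge_abs[of "B * u"] by linarith
      qed
      moreover have "1 + t\<^sup>2 / 8 \<le> (exp (B * u) + exp (- (B * u))) / 2"
      proof -
        have "t\<^sup>2 \<le> (B * u)\<^sup>2" using tBu t0 by (intro power_mono) auto
        then have "1 + t\<^sup>2 / 8 \<le> 1 + (B * u)\<^sup>2 / 8" by simp
        then show ?thesis using avg_ge_quad[of "B * u"] by linarith
      qed
      ultimately have m: "max (exp t / 2) (1 + t\<^sup>2 / 8) \<le> (exp (B * u) + exp (- (B * u))) / 2" by (rule max.boundedI)
      have eq: "1 + a = max (exp t / 2) (1 + t\<^sup>2 / 8)" by (simp add: a_def)
      have "1 + a \<le> (exp (B * u) + exp (- (B * u))) / 2" unfolding eq by (rule m)
      then show ?thesis using E0 by (intro mult_left_mono) auto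
    qed
    show "exp (f (center N k)) * (1 + (if x \<in> cbox (sblo N k i0 (3/4)) (sbhi N k i0 1) then a else 0))
        \<le> (exp (f x) + exp (f (2 *\<^sub>R center N k - x))) / 2"
      using base onS unfolding avg[unfolded c_def] c_def by (cases "x \<in> cbox (sblo N k i0 (3/4)) (sbhi N k i0 1)") auto
  qed
  then show "(1 + a / 4) * ((1 / real N ^ CARD('d)) * exp (f (center N k))) \<le> integral (cell N k) (\<lambda>x. exp (f x))" .
qed


lemma W2_lower:
  fixes i0 :: "'d::finite"
  assumes N: "N \<ge> 1" and va: "valid_assign N \<sigma>" and B: "B \<ge> 0"
  defines "f \<equiv> (\<lambda>x::real^'d. c2 B 0 (x $ i0))"
  shows "ln (1 + B / (128 * (real N)\<^sup>2)) \<le> Lf f - Lf (gn N \<sigma> f)"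
proof -
  define a where "a = B / (32 * (real N)\<^sup>2)"
  have cont: "continuous_on UNIV f" unfolding f_def
    by (rule Ck_cont[OF Ck_coord[where \<phi>="c2 B" and m=0 and n=0, OF c2_deriv]])
  have a0: "a \<ge> 0" using B by (simp add: a_def)
  have "ln (1 + a / 4) \<le> Lf f - Lf (gn N \<sigma> f)"
  proof (rule L_lower[OF N va cont])
    show "1 + a / 4 > 0" using a0 by simp
    fix k :: "'d \<Rightarrow> nat" assume k: "k \<in> KK N"
    show "(1 + a / 4) * ((1 / real N ^ CARD('d)) * exp (f (center N k))) \<le> integral (cell N k) (\<lambda>x. exp (f x))"
    proof (rule cell_lower[OF N cont])
      fix x assume x: "x \<in> cell N k"
      define c where "c = center N k"
      define u where "u = x $ i0 - c $ i0"
      define v where "v = B * (c $ i0) * u"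
      have xi: "x $ i0 = c $ i0 + u" by (simp add: u_def)
      have xi': "(2 *\<^sub>R c - x) $ i0 = c $ i0 - u" by (simp add: u_def)
      have fc: "f c = B * (c $ i0)\<^sup>2 / 2" by (simp add: f_def c2_def)
      have "f x = B * (c $ i0 + u)\<^sup>2 / 2" by (simp add: f_def c2_def xi)
      also have "\<dots> = B * (c $ i0)\<^sup>2 / 2 + (B * u\<^sup>2 / 2 + B * (c $ i0) * u)" by (simp add: power2_eq_square field_simps)
      finally have fx: "f x = f c + (B * u\<^sup>2 / 2 + v)" by (simp add: fc v_def)
      have "f (2 *\<^sub>R c - x) = B * (c $ i0 - u)\<^sup>2 / 2" unfolding f_def c2_def xi' by simp
      also have "\<dots> = B * (c $ i0)\<^sup>2 / 2 + (B * u\<^sup>2 / 2 + - (B * (c $ i0) * u))" by (simp add: power2_eq_square field_simps)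
      finally have fx': "f (2 *\<^sub>R c - x) = f c + (B * u\<^sup>2 / 2 + - v)" by (simp add: fc v_def)
      have ex: "exp (f x) = exp (f c) * exp (B * u\<^sup>2 / 2) * exp v" unfolding fx by (simp only: exp_add mult.assoc)
      have ex': "exp (f (2 *\<^sub>R c - x)) = exp (f c) * exp (B * u\<^sup>2 / 2) * exp (- v)" unfolding fx' by (simp only: exp_add mult.assoc)
      have avg: "(exp (f x) + exp (f (2 *\<^sub>R c - x))) / 2 = exp (f c) * (exp (B * u\<^sup>2 / 2) * ((exp v + exp (- v)) / 2))"
        unfolding ex ex' by (simp add: field_simps)
      have E0: "exp (f c) > 0" by simp
      have q: "1 + B * u\<^sup>2 / 2 \<le> exp (B * u\<^sup>2 / 2)" by (rule exp_ge_add_one_self)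
      have q0: "0 \<le> B * u\<^sup>2 / 2" using B by simp
      have w1: "1 \<le> exp (B * u\<^sup>2 / 2) * ((exp v + exp (- v)) / 2)"
      proof -
        have "1 * 1 \<le> exp (B * u\<^sup>2 / 2) * ((exp v + exp (- v)) / 2)"
          using q q0 avg_ge1[of v] by (intro mult_mono) auto
        then show ?thesis by simp
      qed
      have onS: "1 + a \<le> exp (B * u\<^sup>2 / 2) * ((exp v + exp (- v)) / 2)"
        if S: "x \<in> cbox (sblo N k i0 (3/4)) (sbhi N k i0 1)"
      proof -
        have u: "1 / (4 * real N) \<le> u" using S_u(1)[OF N S] by (simp add: u_def c_def)
        have u0: "0 \<le> 1 / (4 * real N)" by simp
        have "(1 / (4 * real N))\<^sup>2 \<le> u\<^sup>2" using power_mono[OF u u0] .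
        then have "B * (1 / (4 * real N))\<^sup>2 \<le> B * u\<^sup>2" using B by (rule mult_left_mono)
        moreover have "B * (1 / (4 * real N))\<^sup>2 = 2 * a" by (simp add: a_def power2_eq_square field_simps)
        ultimately have "a \<le> B * u\<^sup>2 / 2" by simp
        then have "1 + a \<le> exp (B * u\<^sup>2 / 2)" using q by linarith
        also have "\<dots> = exp (B * u\<^sup>2 / 2) * 1" by simp
        also have "\<dots> \<le> exp (B * u\<^sup>2 / 2) * ((exp v + exp (- v)) / 2)"
          using avg_ge1[of v] by (intro mult_left_mono) auto
        finally show ?thesis .
      qed
      show "exp (f (center N k)) * (1 + (if x \<in> cbox (sblo N k i0 (3/4)) (sbhi N k i0 1) then a else 0))
          \<le> (exp (f x) + exp (f (2 *\<^sub>R center N k - x))) / 2"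
      proof -
        have fin: "exp (f c) * (1 + (if x \<in> cbox (sblo N k i0 (3/4)) (sbhi N k i0 1) then a else 0))
            \<le> exp (f c) * (exp (B * u\<^sup>2 / 2) * ((exp v + exp (- v)) / 2))"
          using w1 onS E0 by (cases "x \<in> cbox (sblo N k i0 (3/4)) (sbhi N k i0 1)") (auto intro: mult_left_mono)
        then have "exp (f c) * (1 + (if x \<in> cbox (sblo N k i0 (3/4)) (sbhi N k i0 1) then a else 0))
            \<le> (exp (f x) + exp (f (2 *\<^sub>R c - x))) / 2" unfolding avg .
        then show ?thesis by (simp add: c_def)
      qed
    qed
  qed
  moreover have "a / 4 = B / (128 * (real N)\<^sup>2)" by (simp add: a_def)
  ultimately show ?thesis by simp
qed

lemma cos_add_2pin: "cos (x + 2 * pi * real n) = cos x"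
proof (induction n)
  case 0 then show ?case by simp
next
  case (Suc n)
  have "x + 2 * pi * real (Suc n) = (x + 2 * pi * real n) + 2 * pi" by (simp add: algebra_simps)
  then show ?case using Suc by (simp only: cos_periodic)
qed

lemma W3_lower:
  fixes i0 :: "'d::finite"
  assumes N: "N \<ge> 1" and va: "valid_assign N \<sigma>" and B: "B \<ge> 0"
  defines "A \<equiv> B / (2 * pi * real N)" and "w \<equiv> 2 * pi * real N"
  defines "f \<equiv> (\<lambda>x::real^'d. c3 A w 0 (x $ i0))"
  shows "ln (1 + A / 8) \<le> Lf f - Lf (gn N \<sigma> f)"
proof -
  have cont: "continuous_on UNIV f" unfolding f_def
    by (rule Ck_cont[OF Ck_coord[where \<phi>="c3 A w" and m=0 and n=0, OF c3_deriv]])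
  have A0: "A \<ge> 0" using B by (simp add: A_def)
  have fdef: "f x = A + A * cos (w * x $ i0)" for x by (simp add: f_def c3_def)
  have f0: "f x \<ge> 0" for x
  proof -
    have "A * (-1) \<le> A * cos (w * x $ i0)" using A0 by (intro mult_left_mono) auto
    then show ?thesis by (simp add: fdef)
  qed
  have fc: "f (center N k) = 0" for k :: "'d \<Rightarrow> nat"
  proof -
    have "w * center N k $ i0 = real (2 * k i0 + 1) * pi"
      using N by (simp add: w_def center_nth field_simps)
    moreover have "cos (real (2 * k i0 + 1) * pi) = (-1) ^ (2 * k i0 + 1)" by (rule cos_npi)
    ultimately have "cos (w * center N k $ i0) = -1" by simp
    then show ?thesis by (simp add: fdef)
  qed
  have "ln (1 + (A / 2) / 4) \<le> Lf f - Lf (gn N \<sigma> f)"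
  proof (rule L_lower[OF N va cont])
    show "1 + (A / 2) / 4 > 0" using A0 by simp
    fix k :: "'d \<Rightarrow> nat" assume k: "k \<in> KK N"
    show "(1 + (A / 2) / 4) * ((1 / real N ^ CARD('d)) * exp (f (center N k))) \<le> integral (cell N k) (\<lambda>x. exp (f x))"
    proof (rule cell_lower[OF N cont])
      fix x assume x: "x \<in> cell N k"
      have e1: "1 \<le> exp (f y)" for y using f0[of y] by simp
      have onS: "1 + A / 2 \<le> (exp (f x) + exp (f (2 *\<^sub>R center N k - x))) / 2"
        if S: "x \<in> cbox (sblo N k i0 (3/4)) (sbhi N k i0 1)"
      proof -
        define th where "th = w * x $ i0 - 2 * pi * real (k i0 + 1)"
        have lo: "(real (k i0) + 3/4) / real N \<le> x $ i0" and hi: "x $ i0 \<le> (real (k i0) + 1) / real N"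
          using S_u(2,3)[OF N S] by auto
        have w0: "w \<ge> 0" by (simp add: w_def)
        have "w * ((real (k i0) + 3/4) / real N) \<le> w * x $ i0" using mult_left_mono[OF lo w0] .
        moreover have "w * ((real (k i0) + 3/4) / real N) = 2 * pi * real (k i0 + 1) - pi / 2"
          using N by (simp add: w_def field_simps)
        ultimately have th1: "- (pi / 2) \<le> th" by (simp add: th_def)
        have "w * x $ i0 \<le> w * ((real (k i0) + 1) / real N)" using mult_left_mono[OF hi w0] .
        moreover have "w * ((real (k i0) + 1) / real N) = 2 * pi * real (k i0 + 1)"
          using N by (simp add: w_def field_simps)
        ultimately have "w * x $ i0 \<le> 2 * pi * real (k i0 + 1)" by simp
        then have "th \<le> 0" unfolding th_def by linarith
        moreover have "0 \<le> pi / 2" by simp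
        ultimately have th2: "th \<le> pi / 2" by (rule order_trans)
        have "cos (w * x $ i0) = cos (th + 2 * pi * real (k i0 + 1))" by (simp add: th_def)
        also have "\<dots> = cos th" by (rule cos_add_2pin)
        finally have "cos (w * x $ i0) \<ge> 0" using cos_ge_zero[OF th1 th2] by simp
        then have "A \<le> f x" using A0 by (simp add: fdef)
        then have "1 + A \<le> exp (f x)" using exp_ge_add_one_self[of "f x"] by linarith
        then have "2 + A \<le> exp (f x) + exp (f (2 *\<^sub>R center N k - x))" using e1[of "2 *\<^sub>R center N k - x"] by linarith
        then show ?thesis by simp
      qed
      have base: "1 \<le> (exp (f x) + exp (f (2 *\<^sub>R center N k - x))) / 2"
      proof -
        have "2 \<le> exp (f x) + exp (f (2 *\<^sub>R center N k - x))" using e1[of x] e1[of "2 *\<^sub>R center N k - x"] by linarith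
        then show ?thesis by simp
      qed
      show "exp (f (center N k)) * (1 + (if x \<in> cbox (sblo N k i0 (3/4)) (sbhi N k i0 1) then A / 2 else 0))
          \<le> (exp (f x) + exp (f (2 *\<^sub>R center N k - x))) / 2"
        unfolding fc using base onS by (cases "x \<in> cbox (sblo N k i0 (3/4)) (sbhi N k i0 1)") auto
    qed
  qed
  then show ?thesis by simp
qed


lemma sb_box_sub:
  fixes k :: "'d::finite \<Rightarrow> nat"
  assumes N: "N \<ge> 1" and "0 \<le> a" "b \<le> 1"
  shows "box (sblo N k i0 a) (sbhi N k i0 b) \<subseteq> box (clo N k) (chi N k)"
proof
  fix x assume x: "x \<in> box (sblo N k i0 a) (sbhi N k i0 b)"
  have N0: "real N > 0" using N by simp
  show "x \<in> box (clo N k) (chi N k)" unfolding mem_box_cart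
  proof
    fix j
    have "sblo N k i0 a $ j < x$j" "x$j < sbhi N k i0 b $ j" using x by (auto simp: mem_box_cart)
    moreover have "clo N k $ j \<le> sblo N k i0 a $ j" "sbhi N k i0 b $ j \<le> chi N k $ j"
      using assms N0 by (auto simp: sblo_def sbhi_def clo_def chi_def divide_right_mono)
    ultimately show "clo N k $ j < x $ j \<and> x $ j < chi N k $ j" by linarith
  qed
qed

lemma sb_box_ne:
  fixes k :: "'d::finite \<Rightarrow> nat"
  assumes N: "N \<ge> 1" and "a < b" "b \<le> 1"
  shows "box (sblo N k i0 a) (sbhi N k i0 b) \<noteq> {}"
proof -
  have N0: "real N > 0" using N by simp
  have lt: "sblo N k i0 a $ j < sbhi N k i0 b $ j" for j
    using assms N0 by (auto simp: sblo_def sbhi_def divide_strict_right_mono)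
  define p where "p = (\<chi> j. (sblo N k i0 a $ j + sbhi N k i0 b $ j) / 2)"
  have "p \<in> box (sblo N k i0 a) (sbhi N k i0 b)"
    unfolding mem_box_cart p_def using lt by (simp add: field_simps)
  then show ?thesis by blast
qed

lemma c1_Fclass:
  fixes i0 :: "'d::finite"
  assumes "B \<ge> 0"
  shows "(\<lambda>x::real^'d. c1 B 0 (x $ i0)) \<in> Fclass m B"
proof (rule coord_Fclass[where \<phi>="c1 B", OF c1_deriv assms])
  fix n :: nat and t :: real assume "0 \<le> t" "t \<le> 1"
  then show "\<bar>c1 B n t\<bar> \<le> B" using assms by (auto simp: c1_def abs_mult mult_left_le)
qed

lemma c2_Fclass:
  fixes i0 :: "'d::finite"
  assumes B: "B \<ge> 0"
  shows "(\<lambda>x::real^'d. c2 B 0 (x $ i0)) \<in> Fclass m B"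
proof (rule coord_Fclass[where \<phi>="c2 B", OF c2_deriv B])
  fix n :: nat and t :: real assume t: "0 \<le> t" "t \<le> 1"
  have "t\<^sup>2 \<le> 1" using t by (simp add: power_le_one)
  then have "B * t\<^sup>2 \<le> B * 1" using B by (intro mult_left_mono) auto
  then have q: "B * t\<^sup>2 / 2 \<le> B" using B by simp
  have l: "B * t \<le> B" using t B by (simp add: mult_left_le)
  show "\<bar>c2 B n t\<bar> \<le> B" using q l B t by (auto simp: c2_def abs_mult)
qed

lemma c3_Fclass:
  fixes i0 :: "'d::finite"
  assumes B: "B \<ge> 0" and N: "N \<ge> 1"
  defines "A \<equiv> B / (2 * pi * real N)" and "w \<equiv> 2 * pi * real N"
  shows "(\<lambda>x::real^'d. c3 A w 0 (x $ i0)) \<in> Fclass 1 B"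
proof (rule coord_Fclass[where \<phi>="c3 A w", OF c3_deriv B])
  fix n :: nat and t :: real assume n: "n \<le> 1"
  have A0: "A \<ge> 0" using B by (simp add: A_def)
  have Aw: "A * w = B" using N by (simp add: A_def w_def)
  have "2 * A \<le> B"
  proof -
    have "2 * A = B / (pi * real N)" by (simp add: A_def)
    also have "\<dots> \<le> B / 1"
    proof (rule divide_left_mono[OF _ B])
      have "1 \<le> pi" using pi_gt3 by simp
      then show "1 \<le> pi * real N" using N by (metis mult_mono' mult_1 of_nat_1 of_nat_mono zero_le_one)
    qed (use N in simp)
    finally show ?thesis by simp
  qed
  moreover have "\<bar>A * cos y\<bar> \<le> A" for y using A0 by (simp add: abs_mult mult_left_le)
  ultimately show "\<bar>c3 A w n t\<bar> \<le> B" using n A0 Aw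
  proof -
    assume "\<And>y. \<bar>A * cos y\<bar> \<le> A"
    consider "n = 0" | "n = 1" using n by linarith
    then show ?thesis
    proof cases
      case 1
      have "\<bar>A + A * cos (w * t)\<bar> \<le> \<bar>A\<bar> + \<bar>A * cos (w * t)\<bar>" by (rule abs_triangle_ineq)
      also have "\<dots> \<le> A + A" using A0 \<open>\<And>y. \<bar>A * cos y\<bar> \<le> A\<close> by simp
      finally show ?thesis using 1 \<open>2 * A \<le> B\<close> by (simp add: c3_def)
    next
      case 2
      have "\<bar>A * w * cos (w * t + pi / 2)\<bar> \<le> A * w"
        using A0 Aw B by (simp add: abs_mult mult_left_le)
      then show ?thesis using 2 Aw by (simp add: c3_def)
    qed
  qed
qed


lemma W1_D_lower:
  fixes i0 :: "'d::finite"
  assumes N: "N \<ge> 1" and va: "valid_assign N \<sigma>" and B: "B \<ge> 0"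
  defines "f \<equiv> (\<lambda>x::real^'d. c1 B 0 (x $ i0))"
  shows "ereal (B / (4 * real N)) \<le> D_suplog (Pf f) (Pf (gn N \<sigma> f))"
proof -
  define k0 :: "'d \<Rightarrow> nat" where "k0 = (\<lambda>_. 0)"
  have k0: "k0 \<in> KK N" using KK_ne[OF N] by (simp add: k0_def)
  have N0: "real N > 0" using N by simp
  have fF: "f \<in> Fclass 1 B" unfolding f_def by (rule c1_Fclass[OF B])
  note U = UB1[OF fF _ N va, simplified]
  note G = Zg_props[OF N va, of f]
  define g where "g = gn N \<sigma> f"
  define dl where "dl = Lf f - Lf g"
  have fx: "f x = B * x $ i0" for x by (simp add: f_def c1_def)
  have gx: "g x = B * ((1/2) / real N)" if "x \<in> box (clo N k0) (chi N k0)" for x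
  proof -
    have "\<sigma> x = k0" by (rule valid_assign_box[OF N va k0 that])
    then show ?thesis by (simp add: g_def gn_def fx center_nth k0_def)
  qed
  have sub: "box (clo N k0) (chi N k0) \<subseteq> unitcube"
    using cell_sub_cube[OF k0] box_subset_cbox cell_cbox by blast
  show ?thesis
  proof (cases "dl \<ge> 0")
    case True
    define S where "S = box (sblo N k0 i0 0) (sbhi N k0 i0 (1/4))"
    have SS: "S \<subseteq> box (clo N k0) (chi N k0)" unfolding S_def by (rule sb_box_sub[OF N]) auto
    show ?thesis unfolding g_def[symmetric]
    proof (rule D_lower[OF U(5) U(4) G(3)[folded g_def] G(2)[folded g_def]])
      show "open S" unfolding S_def by (rule open_box)
      show "S \<noteq> {}" unfolding S_def by (rule sb_box_ne[OF N]) auto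
      show "S \<subseteq> unitcube" using SS sub by blast
      fix x assume x: "x \<in> S"
      have "x $ i0 < sbhi N k0 i0 (1/4) $ i0" using x by (auto simp: S_def mem_box_cart)
      then have xl: "x $ i0 < (1/4) / real N" by (simp add: sbhi_def k0_def)
      have "B * x $ i0 \<le> B * ((1/4) / real N)" using xl B by (intro mult_left_mono) auto
      moreover have "B * ((1/4) / real N) = B * ((1/2) / real N) - B / (4 * real N)" by (simp add: field_simps)
      ultimately have "f x - g x \<le> - (B / (4 * real N))" using gx[of x] SS x fx[of x] by auto
      then have "B / (4 * real N) \<le> \<bar>f x - g x - dl\<bar>" using True by linarith
      then show "B / (4 * real N) \<le> \<bar>f x - g x - (Lf f - Lf g)\<bar>" by (simp add: dl_def)
    qed
  next
    case False
    define S where "S = box (sblo N k0 i0 (3/4)) (sbhi N k0 i0 1)"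
    have SS: "S \<subseteq> box (clo N k0) (chi N k0)" unfolding S_def by (rule sb_box_sub[OF N]) auto
    show ?thesis unfolding g_def[symmetric]
    proof (rule D_lower[OF U(5) U(4) G(3)[folded g_def] G(2)[folded g_def]])
      show "open S" unfolding S_def by (rule open_box)
      show "S \<noteq> {}" unfolding S_def by (rule sb_box_ne[OF N]) auto
      show "S \<subseteq> unitcube" using SS sub by blast
      fix x assume x: "x \<in> S"
      have "sblo N k0 i0 (3/4) $ i0 < x $ i0" using x by (auto simp: S_def mem_box_cart)
      then have xl: "(3/4) / real N < x $ i0" by (simp add: sblo_def k0_def)
      have "B * ((3/4) / real N) \<le> B * x $ i0" using xl B by (intro mult_left_mono) auto
      moreover have "B * ((3/4) / real N) = B * ((1/2) / real N) + B / (4 * real N)" by (simp add: field_simps)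
      ultimately have "B / (4 * real N) \<le> f x - g x" using gx[of x] SS x fx[of x] by auto
      then have "B / (4 * real N) \<le> \<bar>f x - g x - dl\<bar>" using False by linarith
      then show "B / (4 * real N) \<le> \<bar>f x - g x - (Lf f - Lf g)\<bar>" by (simp add: dl_def)
    qed
  qed
qed

lemma exp3_ge8: "8 \<le> exp (3::real)"
proof -
  have "2 \<le> exp (1::real)" using exp_ge_add_one_self[of 1] by simp
  then have "2 ^ 3 \<le> exp (1::real) ^ 3" by (rule power_mono) simp
  also have "exp (1::real) ^ 3 = exp 3" by (simp add: exp_of_nat_mult[symmetric])
  finally show ?thesis by simp
qed

lemma num_C:
  fixes t :: real
  assumes t: "1/4 < t"
  defines "a \<equiv> max (exp t / 2) (1 + t\<^sup>2 / 8) - 1"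
  shows "t \<le> 4096 * ln (1 + a / 4)"
proof -
  have am: "exp t / 2 \<le> 1 + a" "1 + t\<^sup>2 / 8 \<le> 1 + a" by (simp_all add: a_def)
  have "1 \<le> 1 + t\<^sup>2 / 8" by simp
  then have "1 \<le> max (exp t / 2) (1 + t\<^sup>2 / 8)" by (rule max.coboundedI2)
  then have a0: "0 \<le> a" unfolding a_def by simp
  have p: "0 < 1 + a / 4" using a0 by (intro add_pos_nonneg) auto
  show ?thesis
  proof (cases "t \<ge> 4")
    case True
    have "exp t / 8 \<le> 1 + a / 4" using am(1) by simp
    moreover have "exp t / 8 > 0" by simp
    ultimately have "ln (exp t / 8) \<le> ln (1 + a / 4)" using p by (subst ln_le_cancel_iff) auto
    moreover have "ln (exp t / 8) = t - ln 8" by (simp add: ln_div)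
    moreover have "ln 8 \<le> (3::real)" using exp3_ge8 by (metis exp_le_cancel_iff exp_ln zero_less_numeral ln_exp ln_le_cancel_iff exp_gt_zero)
    ultimately have "t - 3 \<le> ln (1 + a / 4)" by linarith
    then show ?thesis using True by linarith
  next
    case False
    have "1/16 \<le> t\<^sup>2"
    proof -
      have "(1/4)\<^sup>2 \<le> t\<^sup>2" using t by (intro power_mono) auto
      then show ?thesis by (simp add: power2_eq_square)
    qed
    then have h: "1 / 512 \<le> a / 4" using am(2) by simp
    have "ln (1 + 1/512) \<le> ln (1 + a / 4)" using h p by (subst ln_le_cancel_iff) auto
    moreover have "(1/512) / 2 \<le> ln (1 + (1/512::real))" by (rule ln_lower_half) auto
    ultimately have "1 / 1024 \<le> ln (1 + a / 4)" by simp
    then have "4 \<le> 4096 * ln (1 + a / 4)" by simp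
    then show ?thesis using False by linarith
  qed
qed

lemma num_B:
  fixes t :: real
  assumes t: "0 \<le> t" "t \<le> 1/4"
  defines "a \<equiv> max (exp t / 2) (1 + t\<^sup>2 / 8) - 1"
  shows "t\<^sup>2 \<le> 64 * ln (1 + a / 4)"
proof -
  have am: "1 + t\<^sup>2 / 8 \<le> 1 + a" by (simp add: a_def)
  have "1 \<le> 1 + t\<^sup>2 / 8" by simp
  then have "1 \<le> max (exp t / 2) (1 + t\<^sup>2 / 8)" by (rule max.coboundedI2)
  then have a0: "0 \<le> a" unfolding a_def by simp
  have p: "0 < 1 + a / 4" using a0 by (intro add_pos_nonneg) auto
  have p2: "0 < 1 + t\<^sup>2 / 32" by (intro add_pos_nonneg) auto
  have tt: "t\<^sup>2 \<le> 1/16"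
  proof -
    have "t\<^sup>2 \<le> (1/4)\<^sup>2" using t by (intro power_mono) auto
    then show ?thesis by (simp add: power2_eq_square)
  qed
  have h: "t\<^sup>2 / 32 \<le> a / 4" using am by simp
  have "ln (1 + t\<^sup>2 / 32) \<le> ln (1 + a / 4)" using h p p2 by (subst ln_le_cancel_iff) auto
  moreover have "(t\<^sup>2 / 32) / 2 \<le> ln (1 + t\<^sup>2 / 32)" by (rule ln_lower_half) (use tt in auto)
  ultimately have "t\<^sup>2 / 64 \<le> ln (1 + a / 4)" by simp
  then show ?thesis by simp
qed


lemma powr_conv:
  assumes N: "N \<ge> 1"
  shows "real (N ^ CARD('d::finite)) powr (- k / real CARD('d)) = real N powr (- k)"
proof -
  have N0: "real N > 0" using N by simp
  have d0: "real CARD('d) > 0" by simp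
  have "real (N ^ CARD('d)) = real N powr real CARD('d)" using N0 by (simp add: powr_realpow)
  then have "real (N ^ CARD('d)) powr (- k / real CARD('d)) = real N powr (real CARD('d) * (- k / real CARD('d)))"
    by (simp add: powr_powr)
  also have "real CARD('d) * (- k / real CARD('d)) = - k" using d0 by simp
  finally show ?thesis .
qed

lemma powr_m1: "N \<ge> 1 \<Longrightarrow> real N powr (- 1) = 1 / real N"
  by (simp add: powr_minus divide_inverse)

lemma powr_m2: "N \<ge> 1 \<Longrightarrow> real N powr (- 2) = 1 / (real N)\<^sup>2"
proof -
  assume N: "N \<ge> 1"
  then have N0: "real N > 0" by simp
  have "real N powr (- 2) = inverse (real N powr 2)" by (simp add: powr_minus)
  also have "real N powr 2 = (real N)\<^sup>2" using N0 by (simp add: powr_numeral)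
  finally show ?thesis by (simp add: divide_inverse)
qed

lemma main:
  fixes m :: nat and \<sigma> :: "real^'d::finite \<Rightarrow> ('d \<Rightarrow> nat)"
  assumes m: "m \<ge> 1" and B: "B > 0" and N: "N \<ge> 1" and va: "valid_assign N \<sigma>"
  defines "d \<equiv> real CARD('d)"
  defines "r1 \<equiv> B / real N"
  defines "r \<equiv> (if m = 1 \<or> r1 > 1 then r1 else max B (B\<^sup>2) / (real N)\<^sup>2)"
  defines "C \<equiv> d\<^sup>2 * exp d + d"
  defines "c \<equiv> 1 / (16384::real)"
  shows "(\<forall>f\<in>(Fclass m B :: (real^'d \<Rightarrow> real) set). \<bar>Lf f - Lf (gn N \<sigma> f)\<bar> \<le> C * r)
    \<and> c * r \<le> (SUP f\<in>(Fclass m B :: (real^'d \<Rightarrow> real) set). \<bar>Lf f - Lf (gn N \<sigma> f)\<bar>)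
    \<and> (\<forall>f\<in>(Fclass m B :: (real^'d \<Rightarrow> real) set). D_suplog (Pf f) (Pf (gn N \<sigma> f)) \<le> ereal (C * r1))
    \<and> ereal (c * r1) \<le> (SUP f\<in>(Fclass m B :: (real^'d \<Rightarrow> real) set). D_suplog (Pf f) (Pf (gn N \<sigma> f)))"
proof -
  define i0 :: 'd where "i0 = undefined"
  have N0: "real N > 0" using N by simp
  have d1: "d \<ge> 1" by (simp add: d_def)
  have B0: "B \<ge> 0" using B by simp
  have r10: "r1 \<ge> 0" using B0 N0 by (simp add: r1_def)
  have hd: "d / 2 \<le> C" and dC: "d \<le> C" and ddC: "d\<^sup>2 * exp d \<le> C" using d1 by (simp_all add: C_def)
  have r0: "r \<ge> 0" using r10 B0 by (simp add: r_def)
  have U: "\<bar>Lf f - Lf (gn N \<sigma> f)\<bar> \<le> C * r" if f: "f \<in> (Fclass m B :: (real^'d \<Rightarrow> real) set)" for f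
  proof (cases "m = 1 \<or> r1 > 1")
    case True
    have "\<bar>Lf f - Lf (gn N \<sigma> f)\<bar> \<le> real CARD('d) * B / (2 * real N)" by (rule UB1(2)[OF f m N va])
    also have "\<dots> = (d / 2) * r1" by (simp add: d_def r1_def)
    also have "\<dots> \<le> C * r1" using hd r10 by (rule mult_right_mono)
    finally show ?thesis using True by (simp add: r_def)
  next
    case False
    then have m2: "m \<ge> 2" and r1le: "r1 \<le> 1" using m by auto
    have BN: "B \<le> real N" using r1le N0 by (simp add: r1_def divide_le_eq)
    have "\<bar>Lf f - Lf (gn N \<sigma> f)\<bar> \<le> d\<^sup>2 * exp d * max B (B\<^sup>2) / (real N)\<^sup>2"
      unfolding d_def by (rule UB2[OF f m2 N va BN])
    also have "\<dots> = (d\<^sup>2 * exp d) * (max B (B\<^sup>2) / (real N)\<^sup>2)" by simp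
    also have "\<dots> \<le> C * (max B (B\<^sup>2) / (real N)\<^sup>2)" using ddC B0 by (intro mult_right_mono) auto
    finally show ?thesis using False by (simp add: r_def)
  qed
  have bdd: "bdd_above ((\<lambda>f. \<bar>Lf f - Lf (gn N \<sigma> f)\<bar>) ` (Fclass m B :: (real^'d \<Rightarrow> real) set))"
    using U by (intro bdd_aboveI[where M="C * r"]) auto
  have UD: "D_suplog (Pf f) (Pf (gn N \<sigma> f)) \<le> ereal (C * r1)" if f: "f \<in> (Fclass m B :: (real^'d \<Rightarrow> real) set)" for f
  proof -
    have "D_suplog (Pf f) (Pf (gn N \<sigma> f)) \<le> ereal (2 * (real CARD('d) * B / (2 * real N)))"
      by (rule UB1(3)[OF f m N va])
    also have "2 * (real CARD('d) * B / (2 * real N)) = d * r1" by (simp add: d_def r1_def)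
    also have "d * r1 \<le> C * r1" using dC r10 by (rule mult_right_mono)
    finally show ?thesis by simp
  qed
  define W1 where "W1 = (\<lambda>x::real^'d. c1 B 0 (x $ i0))"
  have W1F: "W1 \<in> Fclass m B" unfolding W1_def by (rule c1_Fclass[OF B0])
  have L: "c * r \<le> (SUP f\<in>(Fclass m B :: (real^'d \<Rightarrow> real) set). \<bar>Lf f - Lf (gn N \<sigma> f)\<bar>)"
  proof -
    have "\<exists>f\<in>(Fclass m B :: (real^'d \<Rightarrow> real) set). c * r \<le> \<bar>Lf f - Lf (gn N \<sigma> f)\<bar>"
    proof (cases "r1 > 1")
      case True
      define t where "t = B / (4 * real N)"
      have t: "1/4 < t" using True N0 by (simp add: t_def r1_def field_simps)
      have "t \<le> 4096 * ln (1 + (max (exp t / 2) (1 + t\<^sup>2 / 8) - 1) / 4)" by (rule num_C[OF t])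
      also have "ln (1 + (max (exp t / 2) (1 + t\<^sup>2 / 8) - 1) / 4) \<le> Lf W1 - Lf (gn N \<sigma> W1)"
        unfolding W1_def t_def by (rule W1_lower[OF N va B0])
      finally have "t \<le> 4096 * (Lf W1 - Lf (gn N \<sigma> W1))" by simp
      moreover have "c * r = t / 4096" using True by (simp add: c_def r_def t_def r1_def)
      ultimately have "c * r \<le> \<bar>Lf W1 - Lf (gn N \<sigma> W1)\<bar>" by simp
      then show ?thesis using W1F by blast
    next
      case False
      then have r1le: "r1 \<le> 1" by simp
      have BN: "B \<le> real N" using r1le N0 by (simp add: r1_def divide_le_eq)
      show ?thesis
      proof (cases "m = 1")
        case True
        define A where "A = B / (2 * pi * real N)"
        define w where "w = 2 * pi * real N"
        define W3 where "W3 = (\<lambda>x::real^'d. c3 A w 0 (x $ i0))"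
        have W3F: "W3 \<in> Fclass m B" unfolding W3_def A_def w_def True by (rule c3_Fclass[OF B0 N])
        have A0: "0 \<le> A" using B0 by (simp add: A_def)
        have A1: "A \<le> 1"
        proof -
          have "A = (B / real N) / (2 * pi)" by (simp add: A_def)
          also have "\<dots> \<le> 1 / (2 * pi)" using r1le r10 by (intro divide_right_mono) (auto simp: r1_def)
          also have "\<dots> \<le> 1" using pi_gt3 by simp
          finally show ?thesis .
        qed
        have "(A / 8) / 2 \<le> ln (1 + A / 8)" by (rule ln_lower_half) (use A0 A1 in auto)
        also have "ln (1 + A / 8) \<le> Lf W3 - Lf (gn N \<sigma> W3)"
          unfolding W3_def A_def w_def by (rule W3_lower[OF N va B0])
        finally have low: "A / 16 \<le> Lf W3 - Lf (gn N \<sigma> W3)" by simp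
        have "c * r = B / (16384 * real N)" using True by (simp add: c_def r_def r1_def)
        also have "\<dots> \<le> B / (32 * pi * real N)"
        proof (rule divide_left_mono[OF _ B0])
          have "32 * pi \<le> 16384" using pi_less_4 by simp
          then show "32 * pi * real N \<le> 16384 * real N" using N0 by (intro mult_right_mono) auto
          show "0 < 16384 * real N * (32 * pi * real N)" using N0 by simp
        qed
        also have "\<dots> = A / 16" by (simp add: A_def)
        finally have "c * r \<le> \<bar>Lf W3 - Lf (gn N \<sigma> W3)\<bar>" using low by simp
        then show ?thesis using W3F by blast
      next
        case False
        then have nr: "\<not> (m = 1 \<or> r1 > 1)" using r1le by simp
        show ?thesis
        proof (cases "B \<le> 1")
          case True
          define W2 where "W2 = (\<lambda>x::real^'d. c2 B 0 (x $ i0))"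
          have W2F: "W2 \<in> Fclass m B" unfolding W2_def by (rule c2_Fclass[OF B0])
          define y where "y = B / (128 * (real N)\<^sup>2)"
          have y0: "0 \<le> y" using B0 by (simp add: y_def)
          have y1: "y \<le> 1/2"
          proof -
            have "1 \<le> (real N)\<^sup>2" using N by simp
            then have "B \<le> 64 * (real N)\<^sup>2" using True by linarith
            then show ?thesis using N0 unfolding y_def by (simp add: divide_le_eq)
          qed
          have "y / 2 \<le> ln (1 + y)" by (rule ln_lower_half[OF y0 y1])
          also have "ln (1 + y) \<le> Lf W2 - Lf (gn N \<sigma> W2)"
            unfolding W2_def y_def by (rule W2_lower[OF N va B0])
          finally have low: "y / 2 \<le> Lf W2 - Lf (gn N \<sigma> W2)" .
          have mx: "max B (B\<^sup>2) = B"
          proof -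
            have "B\<^sup>2 \<le> B * 1" using mult_left_mono[OF True B0] by (simp add: power2_eq_square)
            then show ?thesis by simp
          qed
          have "c * r = B / (16384 * (real N)\<^sup>2)" using nr mx by (simp add: c_def r_def)
          also have "\<dots> \<le> y / 2" unfolding y_def using B0 N0
            by (simp add: divide_left_mono)
          finally have "c * r \<le> \<bar>Lf W2 - Lf (gn N \<sigma> W2)\<bar>" using low by simp
          then show ?thesis using W2F by blast
        next
          case Bg: False
          define t where "t = B / (4 * real N)"
          have t0: "0 \<le> t" using B0 by (simp add: t_def)
          have t1: "t \<le> 1/4" using r1le N0 by (simp add: t_def r1_def field_simps)
          have "t\<^sup>2 \<le> 64 * ln (1 + (max (exp t / 2) (1 + t\<^sup>2 / 8) - 1) / 4)" by (rule num_B[OF t0 t1])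
          also have "ln (1 + (max (exp t / 2) (1 + t\<^sup>2 / 8) - 1) / 4) \<le> Lf W1 - Lf (gn N \<sigma> W1)"
            unfolding W1_def t_def by (rule W1_lower[OF N va B0])
          finally have low: "t\<^sup>2 \<le> 64 * (Lf W1 - Lf (gn N \<sigma> W1))" by simp
          have mx: "max B (B\<^sup>2) = B\<^sup>2"
          proof -
            have "B * 1 \<le> B\<^sup>2" using Bg B0 by (simp add: power2_eq_square mult_left_mono)
            then show ?thesis by simp
          qed
          have "c * r = B\<^sup>2 / (16384 * (real N)\<^sup>2)" using nr mx by (simp add: c_def r_def)
          also have "\<dots> = t\<^sup>2 / 1024" by (simp add: t_def power2_eq_square field_simps)
          finally have "c * r = t\<^sup>2 / 1024" .
          then have "c * r \<le> \<bar>Lf W1 - Lf (gn N \<sigma> W1)\<bar>" using low by simp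
          then show ?thesis using W1F by blast
        qed
      qed
    qed
    then obtain f where f: "f \<in> (Fclass m B :: (real^'d \<Rightarrow> real) set)" "c * r \<le> \<bar>Lf f - Lf (gn N \<sigma> f)\<bar>" by blast
    show ?thesis by (rule order_trans[OF f(2) cSUP_upper[OF f(1) bdd]])
  qed
  have LD: "ereal (c * r1) \<le> (SUP f\<in>(Fclass m B :: (real^'d \<Rightarrow> real) set). D_suplog (Pf f) (Pf (gn N \<sigma> f)))"
  proof (rule SUP_upper2[OF W1F])
    have "c * r1 \<le> B / (4 * real N)" using B0 N0 by (simp add: c_def r1_def divide_left_mono)
    then have "ereal (c * r1) \<le> ereal (B / (4 * real N))" by simp
    also have "\<dots> \<le> D_suplog (Pf W1) (Pf (gn N \<sigma> W1))" unfolding W1_def by (rule W1_D_lower[OF N va B0])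
    finally show "ereal (c * r1) \<le> D_suplog (Pf W1) (Pf (gn N \<sigma> W1))" .
  qed
  show ?thesis using U L UD LD by blast
qed


theorem theorem16:
  fixes m :: nat
  assumes "m \<ge> 1"
  shows "\<exists>c>0. \<exists>C>0. \<forall>B>0. \<forall>N::nat. \<forall>\<sigma>::real^'d::finite \<Rightarrow> ('d \<Rightarrow> nat).
    N \<ge> 1 \<longrightarrow> valid_assign N \<sigma> \<longrightarrow>
    (let n = N ^ CARD('d); d = real CARD('d);
         r1 = B * real n powr (-1 / d);
         r = (if m = 1 \<or> r1 > 1 then r1 else max B (B^2) * real n powr (-2 / d))
     in (\<forall>f\<in>(Fclass m B :: (real^'d \<Rightarrow> real) set). \<bar>Lf f - Lf (gn N \<sigma> f)\<bar> \<le> C * r)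
      \<and> c * r \<le> (SUP f\<in>(Fclass m B :: (real^'d \<Rightarrow> real) set). \<bar>Lf f - Lf (gn N \<sigma> f)\<bar>)
      \<and> (\<forall>f\<in>(Fclass m B :: (real^'d \<Rightarrow> real) set).
            D_suplog (Pf f) (Pf (gn N \<sigma> f)) \<le> ereal (C * r1))
      \<and> ereal (c * r1) \<le> (SUP f\<in>(Fclass m B :: (real^'d \<Rightarrow> real) set).
            D_suplog (Pf f) (Pf (gn N \<sigma> f))))"
proof -
  define C where "C = (real CARD('d))\<^sup>2 * exp (real CARD('d)) + real CARD('d)"
  have C0: "C > 0" by (simp add: C_def add_nonneg_pos)
  have c0: "(1 / (16384::real)) > 0" by simp
  have "\<forall>B>0. \<forall>N::nat. \<forall>\<sigma>::real^'d::finite \<Rightarrow> ('d \<Rightarrow> nat).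
    N \<ge> 1 \<longrightarrow> valid_assign N \<sigma> \<longrightarrow>
    (let n = N ^ CARD('d); d = real CARD('d);
         r1 = B * real n powr (-1 / d);
         r = (if m = 1 \<or> r1 > 1 then r1 else max B (B^2) * real n powr (-2 / d))
     in (\<forall>f\<in>(Fclass m B :: (real^'d \<Rightarrow> real) set). \<bar>Lf f - Lf (gn N \<sigma> f)\<bar> \<le> C * r)
      \<and> (1 / 16384) * r \<le> (SUP f\<in>(Fclass m B :: (real^'d \<Rightarrow> real) set). \<bar>Lf f - Lf (gn N \<sigma> f)\<bar>)
      \<and> (\<forall>f\<in>(Fclass m B :: (real^'d \<Rightarrow> real) set).
            D_suplog (Pf f) (Pf (gn N \<sigma> f)) \<le> ereal (C * r1))
      \<and> ereal ((1 / 16384) * r1) \<le> (SUP f\<in>(Fclass m B :: (real^'d \<Rightarrow> real) set).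
            D_suplog (Pf f) (Pf (gn N \<sigma> f))))"
  proof (intro allI impI)
    fix B :: real and N :: nat and \<sigma> :: "real^'d \<Rightarrow> ('d \<Rightarrow> nat)"
    assume B: "B > 0" and N: "N \<ge> 1" and va: "valid_assign N \<sigma>"
    have p1: "real (N ^ CARD('d)) powr (-1 / real CARD('d)) = 1 / real N"
      using powr_conv[OF N, of 1] powr_m1[OF N] by simp
    have p2: "real (N ^ CARD('d)) powr (-2 / real CARD('d)) = 1 / (real N)\<^sup>2"
      using powr_conv[OF N, of 2] powr_m2[OF N] by simp
    have e1: "B * (1 / real N) = B / real N" by simp
    have e2: "max B (B\<^sup>2) * (1 / (real N)\<^sup>2) = max B (B\<^sup>2) / (real N)\<^sup>2" by simp
    note M = main[OF assms B N va, folded C_def]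
    show "let n = N ^ CARD('d); d = real CARD('d);
         r1 = B * real n powr (-1 / d);
         r = (if m = 1 \<or> r1 > 1 then r1 else max B (B^2) * real n powr (-2 / d))
     in (\<forall>f\<in>(Fclass m B :: (real^'d \<Rightarrow> real) set). \<bar>Lf f - Lf (gn N \<sigma> f)\<bar> \<le> C * r)
      \<and> (1 / 16384) * r \<le> (SUP f\<in>(Fclass m B :: (real^'d \<Rightarrow> real) set). \<bar>Lf f - Lf (gn N \<sigma> f)\<bar>)
      \<and> (\<forall>f\<in>(Fclass m B :: (real^'d \<Rightarrow> real) set).
            D_suplog (Pf f) (Pf (gn N \<sigma> f)) \<le> ereal (C * r1))
      \<and> ereal ((1 / 16384) * r1) \<le> (SUP f\<in>(Fclass m B :: (real^'d \<Rightarrow> real) set).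
            D_suplog (Pf f) (Pf (gn N \<sigma> f)))"
      unfolding Let_def p1 p2 e1 e2 using M by simp
  qed
  then show ?thesis using C0 c0 by blast
qed


end
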